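(* Let $d\ge1$, $s>0$, $0<a<d$ and $C>0$. Suppose $u$ is an ancient solution of \[ \partial_tu=-\Lambda^su,\qquad (t,x)\in(-\infty,0]\times\mathbb R^d, \] satisfying $|u(t,x)|\le C|x|^{-a}$ for all $(t,x)\in(-\infty,0]\times\mathbb R^d$. Then $u\equiv0$.
   Context: $\Lambda^s=(-\Delta)^{s/2}$ is the Fourier multiplier $|\xi|^s$ on $\mathbb R^d$ (Fourier transform $\widehat f(\xi)=\int f(x)e^{-i\xi\cdot x}dx$). An ancient solution is a solution defined for all times $t\in(-\infty,0]$; it is understood in the sense that $u(t_0)=e^{-(t_0-t)\Lambda^s}u(t)$ for all $t<t_0\le0$, where $e^{-\tau\Lambda^s}$ is the Fourier multiplier $e^{-\tau|\xi|^s}$. *)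

theory Defs
  imports "HOL-Analysis.Analysis"
begin

text \<open>Convolution kernel of the Fourier multiplier exp(-tau |xi|^s) on R^d, d = CARD('n):
  the inverse Fourier transform (2 pi)^(-d) \<integral> exp(-tau |xi|^s) e^(i xi.x) d xi,
  matching the convention  hat f(xi) = \<integral> f(x) e^(-i xi.x) dx.\<close>
definition frac_kernel :: "real \<Rightarrow> real \<Rightarrow> real ^ 'n \<Rightarrow> complex" where
  "frac_kernel s \<tau> x =
     complex_of_real (1 / (2 * pi) ^ CARD('n)) *
     (LINT \<xi>|lborel. complex_of_real (exp (- \<tau> * (norm \<xi> powr s))) * cis (\<xi> \<bullet> x))"

text \<open>The operator exp(-tau Lambda^s) acting on f, i.e. the Fourier multiplier exp(-tau |xi|^s),
  realised as convolution with its (integrable) kernel.\<close>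
definition frac_semigroup :: "real \<Rightarrow> real \<Rightarrow> (real ^ 'n \<Rightarrow> real) \<Rightarrow> real ^ 'n \<Rightarrow> complex" where
  "frac_semigroup s \<tau> f x = (LINT y|lborel. frac_kernel s \<tau> (x - y) * complex_of_real (f y))"

text \<open>Ancient solution of d_t u = - Lambda^s u on (-inf,0] x R^d:
  u(t0) = exp(-(t0 - t) Lambda^s) u(t) for all t < t0 \<le> 0.\<close>
definition ancient_solution :: "real \<Rightarrow> (real \<Rightarrow> real ^ 'n \<Rightarrow> real) \<Rightarrow> bool" where
  "ancient_solution s u \<longleftrightarrow>
     (\<forall>t\<le>0. u t \<in> borel_measurable lborel) \<and>
     (\<forall>t t0 x. t < t0 \<longrightarrow> t0 \<le> 0 \<longrightarrow>
        complex_of_real (u t0 x) = frac_semigroup s (t0 - t) (u t) x)"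

end

theory Submission
  imports Defs
begin


lemma nn_integral_scale_eu:
  fixes f :: "'a::euclidean_space \<Rightarrow> ennreal" and c :: real
  assumes [measurable]: "f \<in> borel_measurable borel" and c: "c \<noteq> 0"
  shows "(\<integral>\<^sup>+x. f x \<partial>lborel) = ennreal (\<bar>c\<bar>^DIM('a)) * (\<integral>\<^sup>+x. f (t + c *\<^sub>R x) \<partial>lborel)"
  by (subst lborel_affine[OF c, of t])
     (simp add: nn_integral_density nn_integral_distr nn_integral_cmult)

lemma integrable_scale_eu:
  fixes f :: "'a::euclidean_space \<Rightarrow> 'b :: {banach, second_countable_topology}"
  assumes f: "integrable lborel f" and c: "c \<noteq> 0"
  shows "integrable lborel (\<lambda>x. f (t + c *\<^sub>R x))"
proof -
  have [measurable]: "f \<in> borel_measurable borel" using f by auto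
  show ?thesis
  using f c unfolding integrable_iff_bounded
  apply (subst (asm) nn_integral_scale_eu[where c=c and t=t])
  by (auto simp: ennreal_mult_less_top)
qed

lemma integrable_scale_eu_iff:
  fixes f :: "'a::euclidean_space \<Rightarrow> 'b :: {banach, second_countable_topology}"
  assumes c: "c \<noteq> 0"
  shows "integrable lborel (\<lambda>x. f (t + c *\<^sub>R x)) \<longleftrightarrow> integrable lborel f"
proof
  assume "integrable lborel (\<lambda>x. f (t + c *\<^sub>R x))"
  from integrable_scale_eu[OF this, of "1/c" "- (1/c) *\<^sub>R t"] c
  show "integrable lborel f" by (simp add: algebra_simps)
qed (rule integrable_scale_eu[OF _ c])

lemma integral_scale_eu:
  fixes f :: "'a::euclidean_space \<Rightarrow> 'b :: {banach, second_countable_topology}"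
  assumes c: "c \<noteq> 0"
  shows "(\<integral>x. f x \<partial>lborel) = (\<bar>c\<bar>^DIM('a)) *\<^sub>R (\<integral>x. f (t + c *\<^sub>R x) \<partial>lborel)"
proof cases
  assume f[measurable]: "integrable lborel f" then show ?thesis
    using c f f[THEN borel_measurable_integrable] integrable_scale_eu[OF f c, of t]
    by (subst lborel_affine[OF c, of t])
       (simp add: integral_density integral_distr)
next
  assume "\<not> integrable lborel f" with c show ?thesis
    by (simp add: integrable_scale_eu_iff not_integrable_integral_eq)
qed


lemma shell_in:
  fixes \<beta> :: real
  assumes b: "\<beta> < DIM('a::euclidean_space)"
  shows "(\<integral>\<^sup>+x. indicator (cball (0::'a) 1) x * ennreal (norm x powr (-\<beta>)) \<partial>lborel) < \<infinity>"
proof -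
  define d where "d = DIM('a)"
  define J where "J k = (\<integral>\<^sup>+x. indicator {x::'a. (1/2)^k < norm x \<and> norm x \<le> 1} x * ennreal (norm x powr (-\<beta>)) \<partial>lborel)" for k :: nat
  define S where "S = (\<integral>\<^sup>+x. indicator {x::'a. 1/2 < norm x \<and> norm x \<le> 1} x * ennreal (norm x powr (-\<beta>)) \<partial>lborel)"
  define q :: real where "q = 2 powr (\<beta> - d)"
  have "2 powr (\<beta> - d) < 2 powr 0" by (rule powr_less_mono) (use b in \<open>auto simp: d_def\<close>)
  then have q0: "0 < q" "q < 1" by (auto simp: q_def)
  have "S \<le> (\<integral>\<^sup>+x. ennreal (2 powr \<bar>\<beta>\<bar>) * indicator (cball (0::'a) 1) x \<partial>lborel)"
    unfolding S_def
  proof (intro nn_integral_mono)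
    fix x :: 'a
    show "indicator {x::'a. 1/2 < norm x \<and> norm x \<le> 1} x * ennreal (norm x powr (-\<beta>)) \<le> ennreal (2 powr \<bar>\<beta>\<bar>) * indicator (cball (0::'a) 1) x"
    proof (cases "1/2 < norm x \<and> norm x \<le> 1")
      case True
      have "norm x powr (-\<beta>) \<le> 2 powr \<bar>\<beta>\<bar>"
      proof (cases "\<beta> \<ge> 0")
        case True
        have "norm x powr (-\<beta>) = (1/norm x) powr \<beta>" using \<open>1/2 < norm x \<and> norm x \<le> 1\<close>
          by (simp add: powr_minus_divide powr_divide)
        also have "\<dots> \<le> 2 powr \<beta>" using \<open>1/2 < norm x \<and> norm x \<le> 1\<close> True
          by (intro powr_mono2) (auto simp: divide_le_eq)
        finally show ?thesis using True by simp
      next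
        case False
        have "norm x powr (-\<beta>) \<le> 1 powr (-\<beta>)" using \<open>1/2 < norm x \<and> norm x \<le> 1\<close> False
          by (intro powr_mono2) auto
        also have "\<dots> \<le> 2 powr \<bar>\<beta>\<bar>" by (simp add: ge_one_powr_ge_zero)
        finally show ?thesis .
      qed
      then show ?thesis using True by (auto simp: indicator_def)
    qed (auto simp: indicator_def)
  qed
  also have "\<dots> < \<infinity>" using emeasure_lborel_cball_finite[of "0::'a" 1] by (simp add: nn_integral_cmult_indicator ennreal_mult_less_top)
  finally have Sfin: "S < \<infinity>" .
  then obtain S' where S': "S = ennreal S'" "S' \<ge> 0" using ennreal_cases[of S] by (metis top.extremum_strict)
  have rec: "J (Suc k) = S + ennreal q * J k" for k
  proof -
    have "J (Suc k) = (\<integral>\<^sup>+x. indicator {x::'a. 1/2 < norm x \<and> norm x \<le> 1} x * ennreal (norm x powr (-\<beta>))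
       + indicator {x::'a. (1/2)^Suc k < norm x \<and> norm x \<le> 1/2} x * ennreal (norm x powr (-\<beta>)) \<partial>lborel)"
      unfolding J_def
      apply (intro nn_integral_cong)
      apply (auto simp: indicator_def)
      using power_le_one[of "1/2::real" k] by linarith
    also have "\<dots> = S + (\<integral>\<^sup>+x. indicator {x::'a. (1/2)^Suc k < norm x \<and> norm x \<le> 1/2} x * ennreal (norm x powr (-\<beta>)) \<partial>lborel)"
      unfolding S_def by (intro nn_integral_add) auto
    also have "(\<integral>\<^sup>+x. indicator {x::'a. (1/2)^Suc k < norm x \<and> norm x \<le> 1/2} x * ennreal (norm x powr (-\<beta>)) \<partial>lborel)
      = ennreal (\<bar>1/2\<bar>^d) * (\<integral>\<^sup>+x. indicator {x::'a. (1/2)^Suc k < norm x \<and> norm x \<le> 1/2} (0 + (1/2::real) *\<^sub>R x) * ennreal (norm (0 + (1/2::real) *\<^sub>R x) powr (-\<beta>)) \<partial>lborel)"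
      unfolding d_def by (rule nn_integral_scale_eu[of "\<lambda>x. indicator {x::'a. (1/2)^Suc k < norm x \<and> norm x \<le> 1/2} x * ennreal (norm x powr (-\<beta>))"]) measurable
    also have "(\<integral>\<^sup>+x. indicator {x::'a. (1/2)^Suc k < norm x \<and> norm x \<le> 1/2} (0 + (1/2::real) *\<^sub>R x) * ennreal (norm (0 + (1/2::real) *\<^sub>R x) powr (-\<beta>)) \<partial>lborel)
       = (\<integral>\<^sup>+x. ennreal (2 powr \<beta>) * (indicator {x::'a. (1/2)^k < norm x \<and> norm x \<le> 1} x * ennreal (norm x powr (-\<beta>))) \<partial>lborel)"
    proof (intro nn_integral_cong)
      fix x :: 'a
      have n: "norm ((1/2::real) *\<^sub>R x) = norm x / 2" by simp
      have p: "(1/2::real)^Suc k = (1/2)^k / 2" by simp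
      have e1: "((1/2::real)^Suc k < norm ((1/2::real) *\<^sub>R x) \<and> norm ((1/2::real) *\<^sub>R x) \<le> 1/2) = ((1/2)^k < norm x \<and> norm x \<le> 1)"
        unfolding n p by linarith
      have e2: "norm ((1/2::real) *\<^sub>R x) powr (-\<beta>) = 2 powr \<beta> * norm x powr (-\<beta>)"
        unfolding n by (simp add: powr_divide powr_minus field_simps)
      show "indicator {x::'a. (1/2)^Suc k < norm x \<and> norm x \<le> 1/2} (0 + (1/2::real) *\<^sub>R x) * ennreal (norm (0 + (1/2::real) *\<^sub>R x) powr (-\<beta>))
        = ennreal (2 powr \<beta>) * (indicator {x::'a. (1/2)^k < norm x \<and> norm x \<le> 1} x * ennreal (norm x powr (-\<beta>)))"
        unfolding add_0_left e2 indicator_def mem_Collect_eq e1 by (simp add: ennreal_mult)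
    qed
    also have "\<dots> = ennreal (2 powr \<beta>) * J k" unfolding J_def by (rule nn_integral_cmult) auto
    finally have "J (Suc k) = S + ennreal ((1/2)^d) * (ennreal (2 powr \<beta>) * J k)" by simp
    also have "ennreal ((1/2)^d) * (ennreal (2 powr \<beta>) * J k) = ennreal ((1/2)^d * 2 powr \<beta>) * J k"
      by (simp add: ennreal_mult mult.assoc)
    also have "(1/2::real)^d * 2 powr \<beta> = q" unfolding q_def
      by (simp add: powr_diff powr_realpow power_one_over field_simps)
    finally show ?thesis .
  qed
  have Jb: "J k \<le> ennreal (S' / (1 - q))" for k
  proof (induction k)
    case 0
    have "J 0 = (\<integral>\<^sup>+x. 0 \<partial>(lborel::'a measure))" unfolding J_def by (intro nn_integral_cong) (simp add: indicator_def)
    then have "J 0 = 0" by simp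
    then show ?case by simp
  next
    case (Suc k)
    have "J (Suc k) \<le> ennreal S' + ennreal q * ennreal (S' / (1 - q))"
      unfolding rec[of k] S'(1) by (intro add_left_mono mult_left_mono Suc.IH) auto
    also have "\<dots> = ennreal (S' + q * (S' / (1 - q)))" using q0 S'
      by (simp add: ennreal_mult[symmetric] divide_nonneg_nonneg)
    also have "S' + q * (S' / (1 - q)) = S' / (1 - q)" using q0 by (simp add: field_simps)
    finally show ?case .
  qed
  have "(\<integral>\<^sup>+x. indicator (cball (0::'a) 1) x * ennreal (norm x powr (-\<beta>)) \<partial>lborel)
      = (\<integral>\<^sup>+x. (SUP k. indicator {x::'a. (1/2)^k < norm x \<and> norm x \<le> 1} x * ennreal (norm x powr (-\<beta>))) \<partial>lborel)"
  proof (intro nn_integral_cong)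
    fix x :: 'a
    show "indicator (cball (0::'a) 1) x * ennreal (norm x powr (-\<beta>)) = (SUP k. indicator {x::'a. (1/2)^k < norm x \<and> norm x \<le> 1} x * ennreal (norm x powr (-\<beta>)))"
    proof (cases "x = 0 \<or> norm x > 1")
      case True then show ?thesis by (auto simp: indicator_def)
    next
      case False
      then have nx: "0 < norm x" "norm x \<le> 1" by auto
      obtain k where k: "(1/2::real)^k < norm x" using real_arch_pow_inv[OF nx(1), of "1/2"] by auto
      show ?thesis
      proof (rule antisym)
        show "indicator (cball (0::'a) 1) x * ennreal (norm x powr (-\<beta>)) \<le> (SUP k. indicator {x::'a. (1/2)^k < norm x \<and> norm x \<le> 1} x * ennreal (norm x powr (-\<beta>)))"
          using k nx by (intro SUP_upper2[where i=k]) (auto simp: indicator_def)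
        show "(SUP k. indicator {x::'a. (1/2)^k < norm x \<and> norm x \<le> 1} x * ennreal (norm x powr (-\<beta>))) \<le> indicator (cball (0::'a) 1) x * ennreal (norm x powr (-\<beta>))"
          using nx by (intro SUP_least) (auto simp: indicator_def)
      qed
    qed
  qed
  also have "\<dots> = (SUP k. J k)" unfolding J_def
  proof (rule nn_integral_monotone_convergence_SUP)
    show "incseq (\<lambda>k x. indicator {x::'a. (1/2)^k < norm x \<and> norm x \<le> 1} x * ennreal (norm x powr (-\<beta>)))"
    proof (intro monoI le_funI)
      fix m n :: nat and x :: 'a assume "m \<le> n"
      then have "(1/2::real)^n \<le> (1/2)^m" by (intro power_decreasing) auto
      then have "(1/2)^m < norm x \<Longrightarrow> (1/2)^n < norm x" by linarith
      then show "indicator {x::'a. (1/2)^m < norm x \<and> norm x \<le> 1} x * ennreal (norm x powr (-\<beta>)) \<le> indicator {x::'a. (1/2)^n < norm x \<and> norm x \<le> 1} x * ennreal (norm x powr (-\<beta>))"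
        by (auto simp: indicator_def)
    qed
  qed auto
  also have "\<dots> \<le> ennreal (S' / (1 - q))" using Jb by (intro SUP_least) auto
  also have "\<dots> < \<infinity>" by simp
  finally show ?thesis .
qed


lemma shell_out:
  fixes \<beta> :: real
  assumes b: "DIM('a::euclidean_space) < \<beta>"
  shows "(\<integral>\<^sup>+x. indicator {x::'a. 1 \<le> norm x} x * ennreal (norm x powr (-\<beta>)) \<partial>lborel) < \<infinity>"
proof -
  define d where "d = DIM('a)"
  define J where "J k = (\<integral>\<^sup>+x. indicator {x::'a. 1 \<le> norm x \<and> norm x < 2^k} x * ennreal (norm x powr (-\<beta>)) \<partial>lborel)" for k :: nat
  define S where "S = (\<integral>\<^sup>+x. indicator {x::'a. 1 \<le> norm x \<and> norm x < 2} x * ennreal (norm x powr (-\<beta>)) \<partial>lborel)"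
  define q :: real where "q = 2 powr (d - \<beta>)"
  have "2 powr (d - \<beta>) < 2 powr 0" by (rule powr_less_mono) (use b in \<open>auto simp: d_def\<close>)
  then have q0: "0 < q" "q < 1" by (auto simp: q_def)
  have "S \<le> (\<integral>\<^sup>+x. ennreal 1 * indicator (cball (0::'a) 2) x \<partial>lborel)"
    unfolding S_def
  proof (intro nn_integral_mono)
    fix x :: 'a
    show "indicator {x::'a. 1 \<le> norm x \<and> norm x < 2} x * ennreal (norm x powr (-\<beta>)) \<le> ennreal 1 * indicator (cball (0::'a) 2) x"
    proof (cases "1 \<le> norm x \<and> norm x < 2")
      case True
      have "norm x powr (-\<beta>) \<le> 1 powr (-\<beta>)" using True b
        by (intro powr_mono2') auto
      then show ?thesis using True by (auto simp: indicator_def)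
    qed (auto simp: indicator_def)
  qed
  also have "\<dots> < \<infinity>" using emeasure_lborel_cball_finite[of "0::'a" 2] by (simp add: nn_integral_cmult_indicator ennreal_mult_less_top)
  finally have Sfin: "S < \<infinity>" .
  then obtain S' where S': "S = ennreal S'" "S' \<ge> 0" using ennreal_cases[of S] by (metis top.extremum_strict)
  have rec: "J (Suc k) = S + ennreal q * J k" for k
  proof -
    have "J (Suc k) = (\<integral>\<^sup>+x. indicator {x::'a. 1 \<le> norm x \<and> norm x < 2} x * ennreal (norm x powr (-\<beta>))
       + indicator {x::'a. 2 \<le> norm x \<and> norm x < 2^Suc k} x * ennreal (norm x powr (-\<beta>)) \<partial>lborel)"
      unfolding J_def
      apply (intro nn_integral_cong)
      apply (auto simp: indicator_def)
      using one_le_power[of "2::real" k] by linarith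
    also have "\<dots> = S + (\<integral>\<^sup>+x. indicator {x::'a. 2 \<le> norm x \<and> norm x < 2^Suc k} x * ennreal (norm x powr (-\<beta>)) \<partial>lborel)"
      unfolding S_def by (intro nn_integral_add) auto
    also have "(\<integral>\<^sup>+x. indicator {x::'a. 2 \<le> norm x \<and> norm x < 2^Suc k} x * ennreal (norm x powr (-\<beta>)) \<partial>lborel)
      = ennreal (\<bar>2\<bar>^d) * (\<integral>\<^sup>+x. indicator {x::'a. 2 \<le> norm x \<and> norm x < 2^Suc k} (0 + (2::real) *\<^sub>R x) * ennreal (norm (0 + (2::real) *\<^sub>R x) powr (-\<beta>)) \<partial>lborel)"
      unfolding d_def by (rule nn_integral_scale_eu[of "\<lambda>x. indicator {x::'a. 2 \<le> norm x \<and> norm x < 2^Suc k} x * ennreal (norm x powr (-\<beta>))"]) measurable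
    also have "(\<integral>\<^sup>+x. indicator {x::'a. 2 \<le> norm x \<and> norm x < 2^Suc k} (0 + (2::real) *\<^sub>R x) * ennreal (norm (0 + (2::real) *\<^sub>R x) powr (-\<beta>)) \<partial>lborel)
       = (\<integral>\<^sup>+x. ennreal (2 powr (-\<beta>)) * (indicator {x::'a. 1 \<le> norm x \<and> norm x < 2^k} x * ennreal (norm x powr (-\<beta>))) \<partial>lborel)"
    proof (intro nn_integral_cong)
      fix x :: 'a
      have n: "norm ((2::real) *\<^sub>R x) = 2 * norm x" by simp
      have p: "(2::real)^Suc k = 2 * 2^k" by simp
      have e1: "(2 \<le> norm ((2::real) *\<^sub>R x) \<and> norm ((2::real) *\<^sub>R x) < 2^Suc k) = (1 \<le> norm x \<and> norm x < 2^k)"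
        unfolding n p by linarith
      have e2: "norm ((2::real) *\<^sub>R x) powr (-\<beta>) = 2 powr (-\<beta>) * norm x powr (-\<beta>)"
        unfolding n by (simp add: powr_mult)
      show "indicator {x::'a. 2 \<le> norm x \<and> norm x < 2^Suc k} (0 + (2::real) *\<^sub>R x) * ennreal (norm (0 + (2::real) *\<^sub>R x) powr (-\<beta>))
        = ennreal (2 powr (-\<beta>)) * (indicator {x::'a. 1 \<le> norm x \<and> norm x < 2^k} x * ennreal (norm x powr (-\<beta>)))"
        unfolding add_0_left e2 indicator_def mem_Collect_eq e1 by (simp add: ennreal_mult)
    qed
    also have "\<dots> = ennreal (2 powr (-\<beta>)) * J k" unfolding J_def by (rule nn_integral_cmult) auto
    finally have "J (Suc k) = S + ennreal (2^d) * (ennreal (2 powr (-\<beta>)) * J k)" by simp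
    also have "ennreal (2^d) * (ennreal (2 powr (-\<beta>)) * J k) = ennreal (2^d * 2 powr (-\<beta>)) * J k"
      by (simp add: ennreal_mult mult.assoc)
    also have "(2::real)^d * 2 powr (-\<beta>) = q" unfolding q_def
      by (simp add: powr_diff powr_realpow powr_minus field_simps)
    finally show ?thesis .
  qed
  have Jb: "J k \<le> ennreal (S' / (1 - q))" for k
  proof (induction k)
    case 0
    have "J 0 = (\<integral>\<^sup>+x. 0 \<partial>(lborel::'a measure))" unfolding J_def by (intro nn_integral_cong) (simp add: indicator_def)
    then show ?case by simp
  next
    case (Suc k)
    have "J (Suc k) \<le> ennreal S' + ennreal q * ennreal (S' / (1 - q))"
      unfolding rec[of k] S'(1) by (intro add_left_mono mult_left_mono Suc.IH) auto
    also have "\<dots> = ennreal (S' + q * (S' / (1 - q)))" using q0 S'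
      by (simp add: ennreal_mult[symmetric] divide_nonneg_nonneg)
    also have "S' + q * (S' / (1 - q)) = S' / (1 - q)" using q0 by (simp add: field_simps)
    finally show ?case .
  qed
  have "(\<integral>\<^sup>+x. indicator {x::'a. 1 \<le> norm x} x * ennreal (norm x powr (-\<beta>)) \<partial>lborel)
      = (\<integral>\<^sup>+x. (SUP k. indicator {x::'a. 1 \<le> norm x \<and> norm x < 2^k} x * ennreal (norm x powr (-\<beta>))) \<partial>lborel)"
  proof (intro nn_integral_cong)
    fix x :: 'a
    show "indicator {x::'a. 1 \<le> norm x} x * ennreal (norm x powr (-\<beta>)) = (SUP k. indicator {x::'a. 1 \<le> norm x \<and> norm x < 2^k} x * ennreal (norm x powr (-\<beta>)))"
    proof (cases "1 \<le> norm x")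
      case False then show ?thesis by (auto simp: indicator_def)
    next
      case True
      obtain k where k: "norm x < (2::real)^k" using real_arch_pow[of 2 "norm x"] by auto
      show ?thesis
      proof (rule antisym)
        show "indicator {x::'a. 1 \<le> norm x} x * ennreal (norm x powr (-\<beta>)) \<le> (SUP k. indicator {x::'a. 1 \<le> norm x \<and> norm x < 2^k} x * ennreal (norm x powr (-\<beta>)))"
          using k True by (intro SUP_upper2[where i=k]) (auto simp: indicator_def)
        show "(SUP k. indicator {x::'a. 1 \<le> norm x \<and> norm x < 2^k} x * ennreal (norm x powr (-\<beta>))) \<le> indicator {x::'a. 1 \<le> norm x} x * ennreal (norm x powr (-\<beta>))"
          using True by (intro SUP_least) (auto simp: indicator_def)
      qed
    qed
  qed
  also have "\<dots> = (SUP k. J k)" unfolding J_def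
  proof (rule nn_integral_monotone_convergence_SUP)
    show "incseq (\<lambda>k x. indicator {x::'a. 1 \<le> norm x \<and> norm x < 2^k} x * ennreal (norm x powr (-\<beta>)))"
    proof (intro monoI le_funI)
      fix m n :: nat and x :: 'a assume "m \<le> n"
      then have "(2::real)^m \<le> 2^n" by (intro power_increasing) auto
      then have "norm x < 2^m \<Longrightarrow> norm x < 2^n" by linarith
      then show "indicator {x::'a. 1 \<le> norm x \<and> norm x < 2^m} x * ennreal (norm x powr (-\<beta>)) \<le> indicator {x::'a. 1 \<le> norm x \<and> norm x < 2^n} x * ennreal (norm x powr (-\<beta>))"
        by (auto simp: indicator_def)
    qed
  qed auto
  also have "\<dots> \<le> ennreal (S' / (1 - q))" using Jb by (intro SUP_least) auto
  also have "\<dots> < \<infinity>" by simp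
  finally show ?thesis .
qed


definition rho :: "real \<Rightarrow> real \<Rightarrow> real \<Rightarrow> real" where
  "rho a b t = sqrt (b + 2*a*t + t^2)"

definition trm :: "real \<Rightarrow> real \<Rightarrow> real \<Rightarrow> real \<times> nat \<times> real \<Rightarrow> real \<Rightarrow> real" where
  "trm s a b p t = (case p of (c,j,\<gamma>) \<Rightarrow> c * (a+t)^j * rho a b t powr \<gamma> * exp (-(rho a b t powr s)))"

definition dstep :: "real \<Rightarrow> real \<times> nat \<times> real \<Rightarrow> (real \<times> nat \<times> real) list" where
  "dstep s p = (case p of (c,j,\<gamma>) \<Rightarrow> [(c * real j, j - 1, \<gamma>), (c*\<gamma>, Suc j, \<gamma> - 2), (- (c * s), Suc j, \<gamma> + s - 2)])"

definition dl :: "real \<Rightarrow> (real \<times> nat \<times> real) list \<Rightarrow> (real \<times> nat \<times> real) list" where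
  "dl s L = concat (map (dstep s) L)"

definition Gm :: "real \<Rightarrow> real \<Rightarrow> real \<Rightarrow> nat \<Rightarrow> real \<Rightarrow> real" where
  "Gm s a b m t = sum_list (map (\<lambda>p. trm s a b p t) ((dl s ^^ m) [(1,0,0)]))"

lemma powr_shift: "(r::real) > 0 \<Longrightarrow> r powr (x + 1) = r powr x * r"
  using powr_add[of r x 1] by simp

lemma rho_deriv:
  assumes "b + 2*a*t + t^2 > 0"
  shows "(rho a b has_real_derivative (a + t) / rho a b t) (at t)"
proof -
  have "((\<lambda>t. sqrt (b + 2*a*t + t^2)) has_real_derivative (inverse (sqrt (b + 2*a*t + t^2)) / 2) * (2*a + 2*t)) (at t)"
    using assms by (auto intro!: derivative_eq_intros)
  moreover have "sqrt (b + 2*a*t + t^2) > 0" using assms by simp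
  then have "(inverse (sqrt (b + 2*a*t + t^2)) / 2) * (2*a + 2*t) = (a + t) / rho a b t"
    by (simp add: rho_def field_simps)
  ultimately have "((\<lambda>t. sqrt (b + 2*a*t + t^2)) has_real_derivative (a + t) / rho a b t) (at t)"
    by (rule DERIV_cong)
  then show ?thesis unfolding rho_def[abs_def] .
qed

lemma trm_deriv:
  assumes pos: "b + 2*a*t + t^2 > 0"
  shows "(trm s a b p has_real_derivative sum_list (map (\<lambda>q. trm s a b q t) (dstep s p))) (at t)"
proof -
  obtain c j \<gamma> where p: "p = (c,j,\<gamma>)" by (cases p) auto
  define r where "r = rho a b t"
  have r0: "r > 0" using pos by (simp add: r_def rho_def)
  have dr: "(rho a b has_real_derivative (a + t) / r) (at t)" unfolding r_def by (rule rho_deriv[OF pos])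
  have dpow: "((\<lambda>t. (a+t)^j) has_real_derivative real j * (a+t)^(j-1)) (at t)"
    by (auto intro!: derivative_eq_intros)
  have dg: "((\<lambda>t. rho a b t powr \<gamma>) has_real_derivative \<gamma> * r powr (\<gamma> - 1) * ((a + t) / r)) (at t)"
    using DERIV_fun_powr[OF dr, of \<gamma>] r0 unfolding r_def by (simp add: mult.assoc)
  have de: "((\<lambda>t. exp (-(rho a b t powr s))) has_real_derivative exp (-(r powr s)) * (- (s * r powr (s - 1) * ((a + t) / r)))) (at t)"
    using r0 unfolding r_def by (auto intro!: derivative_eq_intros dr[unfolded r_def])
  have D0: "((\<lambda>t. c * (a+t)^j) has_real_derivative c * (real j * (a+t)^(j-1))) (at t)"
    by (intro DERIV_cmult dpow)
  note D2 = DERIV_mult[OF DERIV_mult[OF D0 dg] de]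
  have ft: "trm s a b p = (\<lambda>t. c * (a+t)^j * rho a b t powr \<gamma> * exp (-(rho a b t powr s)))"
    by (auto simp: trm_def p)
  have D: "(trm s a b p has_real_derivative
      c * (real j * (a+t)^(j-1)) * r powr \<gamma> * exp (-(r powr s))
    + c * (a+t)^j * (\<gamma> * r powr (\<gamma> - 1) * ((a + t) / r)) * exp (-(r powr s))
    + c * (a+t)^j * r powr \<gamma> * (exp (-(r powr s)) * (- (s * r powr (s - 1) * ((a + t) / r))))) (at t)"
    unfolding ft by (rule DERIV_cong[OF D2]) (simp add: r_def algebra_simps)
  have e1: "c * (real j * (a+t)^(j-1)) * r powr \<gamma> * exp (-(r powr s)) = trm s a b (c * real j, j - 1, \<gamma>) t"
    by (simp add: trm_def r_def)
  have e2: "c * (a+t)^j * (\<gamma> * r powr (\<gamma> - 1) * ((a + t) / r)) * exp (-(r powr s)) = trm s a b (c*\<gamma>, Suc j, \<gamma> - 2) t"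
  proof -
    have h: "r powr (\<gamma> - 1) = r powr (\<gamma> - 2) * r"
      using powr_shift[OF r0, of "\<gamma> - 2"] by (simp add: algebra_simps)
    show ?thesis using r0 by (simp add: trm_def r_def[symmetric] h)
  qed
  have e3: "c * (a+t)^j * r powr \<gamma> * (exp (-(r powr s)) * (- (s * r powr (s - 1) * ((a + t) / r)))) = trm s a b (- (c * s), Suc j, \<gamma> + s - 2) t"
  proof -
    have h: "r powr \<gamma> * r powr (s - 1) = r powr (\<gamma> + s - 2) * r"
      using powr_shift[OF r0, of "\<gamma> + s - 2"] powr_add[of r \<gamma> "s - 1"] by (simp add: algebra_simps)
    have rg: "r powr \<gamma> > 0" using r0 by simp
    have h': "r powr (s - 1) = r powr (\<gamma> + s - 2) * r / r powr \<gamma>"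
      using h rg by (simp add: field_simps)
    show ?thesis using r0 rg by (simp add: trm_def r_def[symmetric] h' field_simps)
  qed
  show ?thesis using D unfolding e1 e2 e3 by (simp add: dstep_def p add.assoc)
qed

lemma sum_trm_deriv:
  assumes pos: "b + 2*a*t + t^2 > 0"
  shows "((\<lambda>t. sum_list (map (\<lambda>q. trm s a b q t) L)) has_real_derivative sum_list (map (\<lambda>q. trm s a b q t) (dl s L))) (at t)"
proof (induction L)
  case Nil then show ?case by (simp add: dl_def)
next
  case (Cons p L)
  have "((\<lambda>t. trm s a b p t + sum_list (map (\<lambda>q. trm s a b q t) L)) has_real_derivative
     sum_list (map (\<lambda>q. trm s a b q t) (dstep s p)) + sum_list (map (\<lambda>q. trm s a b q t) (dl s L))) (at t)"
    by (intro DERIV_add trm_deriv[OF pos] Cons)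
  then show ?case by (simp add: dl_def)
qed

lemma Gm_deriv:
  assumes pos: "b + 2*a*t + t^2 > 0"
  shows "(Gm s a b m has_real_derivative Gm s a b (Suc m) t) (at t)"
  unfolding Gm_def[abs_def] using sum_trm_deriv[OF pos, of s "(dl s ^^ m) [(1,0,0)]"] by simp


lemma set_dl: "set (dl s L) = (\<Union>p\<in>set L. set (dstep s p))"
  by (simp add: dl_def)

lemma dl_invariant:
  assumes s: "s > 0"
  shows "\<forall>(c,j,\<gamma>) \<in> set ((dl s ^^ m) [(1,0,0)]). c \<noteq> 0 \<longrightarrow>
           (real j + \<gamma> \<le> m * s) \<and> (s - m \<le> real j + \<gamma> \<or> (j = 0 \<and> \<gamma> = 0))"
proof (induction m)
  case 0 then show ?case by auto
next
  case (Suc m)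
  show ?case
  proof (clarsimp simp: set_dl)
    fix c' j' \<gamma>' c j \<gamma>
    assume mem: "(c', j', \<gamma>') \<in> set ((dl s ^^ m) [(1, 0, 0)])"
      and in2: "(c, j, \<gamma>) \<in> set (dstep s (c', j', \<gamma>'))" and c: "c \<noteq> 0"
    have c': "c' \<noteq> 0" using in2 c by (auto simp: dstep_def)
    from Suc.IH mem c' have I: "real j' + \<gamma>' \<le> m * s" "s - m \<le> real j' + \<gamma>' \<or> (j' = 0 \<and> \<gamma>' = 0)" by auto
    from in2 consider "c = c' * real j'" "j = j' - 1" "\<gamma> = \<gamma>'" | "c = c' * \<gamma>'" "j = Suc j'" "\<gamma> = \<gamma>' - 2"
      | "c = - (c' * s)" "j = Suc j'" "\<gamma> = \<gamma>' + s - 2"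
      by (auto simp: dstep_def)
    then show "real j + \<gamma> \<le> (1 + real m) * s \<and> (s - (1 + real m) \<le> real j + \<gamma> \<or> j = 0 \<and> \<gamma> = 0)"
    proof cases
      case 1
      then have "j' \<ge> 1" using c by (cases j') auto
      then have "real j = real j' - 1" using 1 by auto
      then show ?thesis using 1 I s c by (auto simp: algebra_simps)
    next
      case 2
      then have "\<gamma>' \<noteq> 0" using c by auto
      then show ?thesis using 2 I s by (auto simp: algebra_simps)
    next
      case 3
      then show ?thesis using I s by (auto simp: algebra_simps)
    qed
  qed
qed

lemma powr_between:
  fixes r :: real
  assumes "r > 0" "lo \<le> x" "x \<le> hi"
  shows "r powr x \<le> r powr lo + r powr hi"
proof (cases "r \<le> 1")
  case True
  then have "r powr x \<le> r powr lo" using assms by (intro powr_mono') auto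
  moreover have "0 \<le> r powr hi" by simp
  ultimately show ?thesis by linarith
next
  case False
  then have "r powr x \<le> r powr hi" using assms by (intro powr_mono) auto
  moreover have "0 \<le> r powr lo" by simp
  ultimately show ?thesis by linarith
qed

definition CG :: "real \<Rightarrow> nat \<Rightarrow> real" where
  "CG s m = sum_list (map (\<lambda>p. case p of (c,j,\<gamma>) \<Rightarrow> \<bar>c\<bar>) ((dl s ^^ m) [(1,0,0)]))"

lemma trm_bound:
  assumes s: "s > 0" and ms: "s \<le> real m" and ab: "a^2 \<le> b" and pos: "b + 2*a*t + t^2 > 0"
    and inv: "c \<noteq> 0 \<longrightarrow> (real j + \<gamma> \<le> m * s) \<and> (s - m \<le> real j + \<gamma> \<or> (j = 0 \<and> \<gamma> = 0))"
  shows "\<bar>trm s a b (c,j,\<gamma>) t\<bar> \<le> \<bar>c\<bar> * ((rho a b t powr (s - m) + rho a b t powr (m * s)) * exp (-(rho a b t powr s)))"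
proof (cases "c = 0")
  case True then show ?thesis by (simp add: trm_def)
next
  case False
  define r where "r = rho a b t"
  have r0: "r > 0" using pos by (simp add: r_def rho_def)
  have "(a+t)^2 \<le> r^2" using ab pos by (simp add: r_def rho_def power2_eq_square algebra_simps)
  then have at: "\<bar>a+t\<bar> \<le> r" using r0 abs_le_square_iff[of "a+t" r] by simp
  have deg: "s - m \<le> real j + \<gamma>" "real j + \<gamma> \<le> m * s" using inv False ms s by auto
  have "\<bar>(a+t)^j * r powr \<gamma>\<bar> \<le> r^j * r powr \<gamma>"
    using at r0 by (simp add: abs_mult power_abs power_mono)
  also have "\<dots> = r powr (real j + \<gamma>)" using r0 by (simp add: powr_add powr_realpow)
  also have "\<dots> \<le> r powr (s - m) + r powr (m * s)" by (rule powr_between[OF r0 deg])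
  finally have "\<bar>(a+t)^j * r powr \<gamma>\<bar> \<le> r powr (s - m) + r powr (m * s)" .
  then have "\<bar>c\<bar> * \<bar>(a+t)^j * r powr \<gamma>\<bar> * exp (-(r powr s)) \<le> \<bar>c\<bar> * (r powr (s - m) + r powr (m * s)) * exp (-(r powr s))"
    by (intro mult_right_mono mult_left_mono) auto
  then show ?thesis by (simp add: trm_def r_def[symmetric] abs_mult mult.assoc)
qed

lemma Gm_bound:
  assumes s: "s > 0" and ms: "s \<le> real m" and ab: "a^2 \<le> b" and pos: "b + 2*a*t + t^2 > 0"
  shows "\<bar>Gm s a b m t\<bar> \<le> CG s m * ((rho a b t powr (s - m) + rho a b t powr (m * s)) * exp (-(rho a b t powr s)))"
proof -
  define L where "L = (dl s ^^ m) [(1,0,0)]"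
  define W where "W = (rho a b t powr (s - m) + rho a b t powr (m * s)) * exp (-(rho a b t powr s))"
  have inv: "\<forall>(c,j,\<gamma>) \<in> set L. c \<noteq> 0 \<longrightarrow> (real j + \<gamma> \<le> m * s) \<and> (s - m \<le> real j + \<gamma> \<or> (j = 0 \<and> \<gamma> = 0))"
    unfolding L_def by (rule dl_invariant[OF s])
  have "\<bar>sum_list (map (\<lambda>p. trm s a b p t) L)\<bar> \<le> sum_list (map (\<lambda>p. case p of (c,j,\<gamma>) \<Rightarrow> \<bar>c\<bar>) L) * W"
    using inv
  proof (induction L)
    case Nil then show ?case by simp
  next
    case (Cons p L)
    obtain c j \<gamma> where p: "p = (c,j,\<gamma>)" by (cases p) auto
    have "\<bar>trm s a b p t\<bar> \<le> \<bar>c\<bar> * W" unfolding p W_def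
      by (rule trm_bound[OF s ms ab pos]) (use Cons.prems p in auto)
    moreover have "\<bar>sum_list (map (\<lambda>p. trm s a b p t) L)\<bar> \<le> sum_list (map (\<lambda>p. case p of (c,j,\<gamma>) \<Rightarrow> \<bar>c\<bar>) L) * W"
      using Cons by auto
    ultimately show ?case by (simp add: p algebra_simps abs_triangle_ineq order_trans[OF abs_triangle_ineq])
  qed
  then show ?thesis unfolding Gm_def CG_def L_def W_def .
qed


fun fd :: "real \<Rightarrow> nat \<Rightarrow> (real \<Rightarrow> real) \<Rightarrow> real \<Rightarrow> real" where
  "fd \<delta> 0 G t = G t"
| "fd \<delta> (Suc m) G t = fd \<delta> m (\<lambda>t. G (t + \<delta>) - G t) t"

lemma fd_diff: "fd \<delta> m (\<lambda>t. A t - B t) x = fd \<delta> m A x - fd \<delta> m B x"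
proof (induction m arbitrary: A B)
  case 0 then show ?case by simp
next
  case (Suc m)
  have "fd \<delta> (Suc m) (\<lambda>t. A t - B t) x = fd \<delta> m (\<lambda>t. (A (t + \<delta>) - A t) - (B (t + \<delta>) - B t)) x"
    by (simp add: algebra_simps)
  also have "\<dots> = fd \<delta> m (\<lambda>t. A (t + \<delta>) - A t) x - fd \<delta> m (\<lambda>t. B (t + \<delta>) - B t) x"
    by (rule Suc.IH)
  finally show ?case by simp
qed

lemma fd_const: "fd \<delta> (Suc m) (\<lambda>t. c) x = 0"
proof -
  have "fd \<delta> m (\<lambda>t. 0) x = 0" for m by (induction m) auto
  then show ?thesis by simp
qed

lemma fd_cong:
  assumes "\<delta> \<ge> 0" "\<And>t. a \<le> t \<Longrightarrow> t \<le> a + m * \<delta> \<Longrightarrow> G t = G' t"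
  shows "fd \<delta> m G a = fd \<delta> m G' a"
  using assms(2)
proof (induction m arbitrary: G G')
  case 0 then show ?case by simp
next
  case (Suc m)
  have "fd \<delta> m (\<lambda>t. G (t + \<delta>) - G t) a = fd \<delta> m (\<lambda>t. G' (t + \<delta>) - G' t) a"
  proof (rule Suc.IH)
    fix t assume "a \<le> t" "t \<le> a + real m * \<delta>"
    then show "G (t + \<delta>) - G t = G' (t + \<delta>) - G' t"
      using Suc.prems[of t] Suc.prems[of "t + \<delta>"] assms(1) by (auto simp: algebra_simps)
  qed
  then show ?case by simp
qed

lemma fd_bound_sup:
  assumes "\<delta> \<ge> 0" "\<And>t. a \<le> t \<Longrightarrow> t \<le> a + m * \<delta> \<Longrightarrow> \<bar>G t\<bar> \<le> M"
  shows "\<bar>fd \<delta> m G a\<bar> \<le> 2^m * M"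
  using assms(2)
proof (induction m arbitrary: G M)
  case 0 then show ?case by simp
next
  case (Suc m)
  have "\<bar>fd \<delta> m (\<lambda>t. G (t + \<delta>) - G t) a\<bar> \<le> 2^m * (2 * M)"
  proof (rule Suc.IH)
    fix t assume "a \<le> t" "t \<le> a + real m * \<delta>"
    then have "\<bar>G (t + \<delta>)\<bar> \<le> M" "\<bar>G t\<bar> \<le> M"
      using Suc.prems[of t] Suc.prems[of "t + \<delta>"] assms(1) by (auto simp: algebra_simps)
    then show "\<bar>G (t + \<delta>) - G t\<bar> \<le> 2 * M" by linarith
  qed
  then show ?case by simp
qed

lemma fd_bound_deriv:
  assumes "\<delta> \<ge> 0"
    and "\<And>k t. k < m \<Longrightarrow> a \<le> t \<Longrightarrow> t \<le> a + m * \<delta> \<Longrightarrow> (Gs k has_real_derivative Gs (Suc k) t) (at t)"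
    and "\<And>t. a \<le> t \<Longrightarrow> t \<le> a + m * \<delta> \<Longrightarrow> \<bar>Gs m t\<bar> \<le> M"
  shows "\<bar>fd \<delta> m (Gs 0) a\<bar> \<le> \<delta>^m * M"
  using assms(2,3)
proof (induction m arbitrary: Gs M)
  case 0 then show ?case by simp
next
  case (Suc m)
  define Hs where "Hs k t = Gs k (t + \<delta>) - Gs k t" for k t
  have "\<bar>fd \<delta> m (Hs 0) a\<bar> \<le> \<delta>^m * (\<delta> * M)"
  proof (rule Suc.IH)
    fix k t assume k: "k < m" and t: "a \<le> t" "t \<le> a + real m * \<delta>"
    have d1: "(Gs k has_real_derivative Gs (Suc k) t) (at t)"
      using Suc.prems(1)[of k t] k t assms(1) by (auto simp: algebra_simps)
    have "(Gs k has_real_derivative Gs (Suc k) (t + \<delta>)) (at (t + \<delta>))"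
      using Suc.prems(1)[of k "t + \<delta>"] k t assms(1) by (auto simp: algebra_simps)
    then have d2: "((\<lambda>t. Gs k (t + \<delta>)) has_real_derivative Gs (Suc k) (t + \<delta>)) (at t)"
      by (simp add: DERIV_shift)
    show "(Hs k has_real_derivative Hs (Suc k) t) (at t)"
      unfolding Hs_def[abs_def] using DERIV_diff[OF d2 d1] by simp
  next
    fix t assume t: "a \<le> t" "t \<le> a + real m * \<delta>"
    show "\<bar>Hs m t\<bar> \<le> \<delta> * M"
    proof (cases "\<delta> = 0")
      case True then show ?thesis by (simp add: Hs_def)
    next
      case False
      then have dp: "\<delta> > 0" using assms(1) by simp
      have "\<And>x. t \<le> x \<Longrightarrow> x \<le> t + \<delta> \<Longrightarrow> (Gs m has_real_derivative Gs (Suc m) x) (at x)"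
        using Suc.prems(1)[of m] t dp by (auto simp: algebra_simps)
      from MVT2[of t "t + \<delta>", OF _ this] dp obtain z where z: "t < z" "z < t + \<delta>" "Gs m (t + \<delta>) - Gs m t = (t + \<delta> - t) * Gs (Suc m) z"
        by auto
      have "\<bar>Gs (Suc m) z\<bar> \<le> M" using Suc.prems(2)[of z] z t dp by (auto simp: algebra_simps)
      then show ?thesis unfolding Hs_def using z(3) dp by (simp add: abs_mult mult_left_mono)
    qed
  qed
  then show ?case by (simp add: Hs_def[abs_def] mult.left_commute)
qed


lemma ball_cball_measurable [measurable]:
  "cball (x::'a::euclidean_space) r \<in> sets borel" "ball x r \<in> sets borel"
  by auto

lemma powr_exp_bound:
  fixes s c B :: real
  assumes s: "s > 0" and c: "c > 0"
  shows "\<exists>C>0. \<forall>r\<ge>1. r powr B * exp (-(c * r powr s)) \<le> C"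
proof -
  define n where "n = max 1 (nat \<lceil>B / s\<rceil>)"
  have n1: "n \<ge> 1" by (simp add: n_def)
  have Bn: "B \<le> real n * s"
  proof -
    have "B / s \<le> real (nat \<lceil>B / s\<rceil>)" by linarith
    also have "\<dots> \<le> real n" by (simp add: n_def)
    finally show ?thesis using s by (simp add: divide_le_eq)
  qed
  define C where "C = (real n / c)^n + 1"
  have C0: "C > 0" unfolding C_def using c by (intro add_nonneg_pos) simp_all
  have "r powr B * exp (-(c * r powr s)) \<le> C" if r: "r \<ge> 1" for r
  proof -
    define x where "x = c * r powr s"
    have x0: "x \<ge> 0" using c by (simp add: x_def)
    have r0: "r powr s > 0" using r by simp
    have e1: "(r powr s)^n = r powr (real n * s)"
    proof -
      have "(r powr s)^n = (r powr s) powr (real n)" by (rule powr_realpow[symmetric]) (use r0 in simp)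
      also have "\<dots> = r powr (s * real n)" by (rule powr_powr)
      finally show ?thesis by (simp add: mult.commute)
    qed
    have e2: "real n / c * (x / real n) = r powr s" using c n1 by (simp add: x_def)
    have e3: "(real n / c)^n * (x / real n)^n = (r powr s)^n"
      unfolding e2[symmetric] by (rule power_mult_distrib[symmetric])
    have "r powr B \<le> r powr (real n * s)" using r Bn by (intro powr_mono) auto
    also have "\<dots> = (real n / c)^n * (x / real n)^n" using e1 e3 by simp
    also have "\<dots> \<le> (real n / c)^n * exp x"
    proof (rule mult_left_mono)
      have "(x / real n)^n \<le> (1 + x / real n)^n" using x0 by (intro power_mono) auto
      also have "\<dots> \<le> exp x" using n1 x0 by (intro exp_ge_one_plus_x_over_n_power_n) auto
      finally show "(x / real n)^n \<le> exp x" .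
    qed (use c in simp)
    finally have "r powr B \<le> (real n / c)^n * exp x" .
    then have "r powr B * exp (-x) \<le> (real n / c)^n * exp x * exp (-x)"
      by (intro mult_right_mono) auto
    also have "\<dots> = (real n / c)^n" by (simp add: exp_minus)
    also have "\<dots> \<le> C" by (simp add: C_def)
    finally show ?thesis by (simp add: x_def)
  qed
  then show ?thesis using C0 by blast
qed

lemma radial_finite:
  fixes g :: "'a::euclidean_space \<Rightarrow> ennreal" and \<beta>i \<beta>o A B :: real
  assumes b1: "\<beta>i < DIM('a)" and b2: "DIM('a) < \<beta>o" and A: "A \<ge> 0" and B: "B \<ge> 0"
    and in1: "\<And>x. norm x \<le> 1 \<Longrightarrow> g x \<le> ennreal (A + B * norm x powr (-\<beta>i))"
    and out1: "\<And>x. 1 \<le> norm x \<Longrightarrow> g x \<le> ennreal (B * norm x powr (-\<beta>o))"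
  shows "(\<integral>\<^sup>+x. g x \<partial>lborel) < \<infinity>"
proof -
  let ?h1 = "\<lambda>x::'a. ennreal A * indicator (cball 0 1) x"
  let ?h2 = "\<lambda>x::'a. ennreal B * (indicator (cball (0::'a) 1) x * ennreal (norm x powr (-\<beta>i)))"
  let ?h3 = "\<lambda>x::'a. ennreal B * (indicator {x::'a. 1 \<le> norm x} x * ennreal (norm x powr (-\<beta>o)))"
  have "(\<integral>\<^sup>+x. g x \<partial>lborel) \<le> (\<integral>\<^sup>+x. ?h1 x + ?h2 x + ?h3 x \<partial>lborel)"
  proof (intro nn_integral_mono)
    fix x :: 'a
    show "g x \<le> ?h1 x + ?h2 x + ?h3 x"
    proof (cases "norm x \<le> 1")
      case True
      have "g x \<le> ennreal (A + B * norm x powr (-\<beta>i))" by (rule in1[OF True])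
      also have "\<dots> = ?h1 x + ?h2 x" using True A B
        by (simp add: indicator_def ennreal_plus ennreal_mult)
      also have "\<dots> \<le> ?h1 x + ?h2 x + ?h3 x" by simp
      finally show ?thesis .
    next
      case False
      have "g x \<le> ennreal (B * norm x powr (-\<beta>o))" using False by (intro out1) auto
      also have "\<dots> = ?h3 x" using False B by (simp add: indicator_def ennreal_mult)
      also have "\<dots> \<le> ?h1 x + ?h2 x + ?h3 x" by simp
      finally show ?thesis .
    qed
  qed
  also have "\<dots> = (\<integral>\<^sup>+x. ?h1 x \<partial>lborel) + (\<integral>\<^sup>+x. ?h2 x \<partial>lborel) + (\<integral>\<^sup>+x. ?h3 x \<partial>lborel)"
    by (subst nn_integral_add; (subst nn_integral_add)?) (auto intro!: borel_measurable_indicator)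
  also have "\<dots> < \<infinity>"
  proof -
    have "(\<integral>\<^sup>+x. ?h1 x \<partial>lborel) < \<infinity>"
      using emeasure_lborel_cball_finite[of "0::'a" 1] by (simp add: nn_integral_cmult_indicator ennreal_mult_less_top)
    moreover have "(\<integral>\<^sup>+x. ?h2 x \<partial>lborel) < \<infinity>"
      using shell_in[OF b1] by (subst nn_integral_cmult) (auto simp: ennreal_mult_less_top)
    moreover have "(\<integral>\<^sup>+x. ?h3 x \<partial>lborel) < \<infinity>"
      using shell_out[OF b2] by (subst nn_integral_cmult) (auto simp: ennreal_mult_less_top)
    ultimately show ?thesis by (simp add: less_top)
  qed
  finally show ?thesis .
qed

lemma emeasure_ball_scale:
  assumes r: "r > 0"
  shows "emeasure lborel (ball (0::'a::euclidean_space) r) = ennreal (r^DIM('a)) * emeasure lborel (ball (0::'a) 1)"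
proof -
  have "emeasure lborel (ball (0::'a) r) = (\<integral>\<^sup>+x. indicator (ball (0::'a) r) x \<partial>lborel)" by simp
  also have "\<dots> = ennreal (\<bar>r\<bar>^DIM('a)) * (\<integral>\<^sup>+x. indicator (ball (0::'a) r) (0 + r *\<^sub>R x) \<partial>lborel)"
    using r by (intro nn_integral_scale_eu) (auto intro!: borel_measurable_indicator)
  also have "(\<integral>\<^sup>+x. indicator (ball (0::'a) r) (0 + r *\<^sub>R x) \<partial>lborel) = (\<integral>\<^sup>+x. indicator (ball (0::'a) 1) x \<partial>lborel)"
    using r by (intro nn_integral_cong) (auto simp: indicator_def)
  finally show ?thesis using r by simp
qed

lemma F_integrable:
  assumes s: "s > 0"
  shows "integrable lborel (\<lambda>\<xi>::'a::euclidean_space. exp (-(norm \<xi> powr s)))"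
proof -
  obtain C where C: "C > 0" "\<And>r. r \<ge> 1 \<Longrightarrow> r powr (real DIM('a) + 1) * exp (-(1 * r powr s)) \<le> C"
    using powr_exp_bound[OF s, of 1 "real DIM('a) + 1"] by auto
  have "(\<integral>\<^sup>+x. ennreal (norm (exp (-(norm (x::'a) powr s)))) \<partial>lborel) < \<infinity>"
  proof (rule radial_finite[where \<beta>i=0 and \<beta>o="real DIM('a) + 1" and A=1 and B=C])
    fix x :: 'a assume "norm x \<le> 1"
    show "ennreal (norm (exp (-(norm x powr s)))) \<le> ennreal (1 + C * norm x powr (-0))"
      using C by (intro ennreal_leI) (auto simp: add_increasing2)
  next
    fix x :: 'a assume x: "1 \<le> norm x"
    have "norm x powr (real DIM('a) + 1) * exp (-(norm x powr s)) \<le> C" using C(2)[OF x] by simp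
    have "x \<noteq> 0" using x by auto
    then have nx: "norm x powr (real DIM('a) + 1) > 0" by simp
    have "exp (-(norm x powr s)) = (norm x powr (real DIM('a) + 1) * exp (-(norm x powr s))) * norm x powr (-(real DIM('a) + 1))"
      using nx \<open>x \<noteq> 0\<close> by (simp add: powr_add[symmetric])
    also have "\<dots> \<le> C * norm x powr (-(real DIM('a) + 1))"
      using \<open>norm x powr (real DIM('a) + 1) * exp (-(norm x powr s)) \<le> C\<close> by (intro mult_right_mono) auto
    finally have "exp (-(norm x powr s)) \<le> C * norm x powr (-(real DIM('a) + 1))" .
    then show "ennreal (norm (exp (-(norm x powr s)))) \<le> ennreal (C * norm x powr (-(real DIM('a) + 1)))"
      by (intro ennreal_leI) simp
  qed (use C in auto)
  then show ?thesis by (intro integrableI_bounded) auto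
qed


definition Fs :: "real \<Rightarrow> 'a::euclidean_space \<Rightarrow> real" where
  "Fs s \<xi> = exp (-(norm \<xi> powr s))"

fun Psi :: "real \<Rightarrow> 'a::euclidean_space \<Rightarrow> nat \<Rightarrow> 'a \<Rightarrow> real" where
  "Psi s h 0 \<xi> = Fs s \<xi>"
| "Psi s h (Suc m) \<xi> = Psi s h m (\<xi> + h) - Psi s h m \<xi>"

definition FI :: "('a::euclidean_space \<Rightarrow> real) \<Rightarrow> 'a \<Rightarrow> complex" where
  "FI \<phi> w = (\<integral>\<xi>. complex_of_real (\<phi> \<xi>) * cis (\<xi> \<bullet> w) \<partial>lborel)"

lemma cis_shift: "cis (x - pi) = - cis x"
  by (simp add: complex_eq_iff cos_diff sin_diff)

lemma FI_translate:
  assumes hw: "h \<bullet> w = pi"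
  shows "FI (\<lambda>\<xi>. \<phi> (\<xi> + h)) w = - FI \<phi> w"
proof -
  have "FI (\<lambda>\<xi>. \<phi> (\<xi> + h)) w = (\<bar>1::real\<bar>^DIM('a)) *\<^sub>R (\<integral>\<xi>. complex_of_real (\<phi> ((-h + 1 *\<^sub>R \<xi>) + h)) * cis ((-h + 1 *\<^sub>R \<xi>) \<bullet> w) \<partial>lborel)"
    unfolding FI_def by (rule integral_scale_eu[of 1 "\<lambda>\<xi>. complex_of_real (\<phi> (\<xi> + h)) * cis (\<xi> \<bullet> w)" "-h"]) simp
  also have "\<dots> = (\<integral>\<xi>. - (complex_of_real (\<phi> \<xi>) * cis (\<xi> \<bullet> w)) \<partial>lborel)"
  proof -
    have "(-h + 1 *\<^sub>R \<xi>) \<bullet> w = \<xi> \<bullet> w - pi" for \<xi> :: 'a using hw by (simp add: inner_simps)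
    then show ?thesis by (simp add: cis_shift)
  qed
  also have "\<dots> = - FI \<phi> w" unfolding FI_def by (rule integral_minus)
  finally show ?thesis .
qed

lemma FI_integrable:
  assumes "integrable lborel \<phi>"
  shows "integrable lborel (\<lambda>\<xi>::'a::euclidean_space. complex_of_real (\<phi> \<xi>) * cis (\<xi> \<bullet> w))"
proof (rule Bochner_Integration.integrable_bound[OF integrable_norm[OF assms]])
  have [measurable]: "\<phi> \<in> borel_measurable lborel" using assms by auto
  have [measurable]: "(\<lambda>x::'a. cis (x \<bullet> w)) \<in> borel_measurable borel"
    by (intro borel_measurable_continuous_onI continuous_intros)
  show "(\<lambda>\<xi>. complex_of_real (\<phi> \<xi>) * cis (\<xi> \<bullet> w)) \<in> borel_measurable lborel"
    by measurable
  show "AE x in lborel. norm (complex_of_real (\<phi> x) * cis (x \<bullet> w)) \<le> norm (norm (\<phi> x))"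
    by (simp add: norm_mult)
qed

lemma Psi_integrable:
  assumes s: "s > 0"
  shows "integrable lborel (Psi s h m)"
proof (induction m)
  case 0
  show ?case using F_integrable[OF s] by (simp add: Fs_def[abs_def])
next
  case (Suc m)
  have "integrable lborel (\<lambda>x. Psi s h m (h + 1 *\<^sub>R x))"
    by (rule integrable_scale_eu[OF Suc.IH]) simp
  then have "integrable lborel (\<lambda>x. Psi s h m (x + h))" by (simp add: add.commute)
  then show ?case unfolding Psi.simps[abs_def] by (intro Bochner_Integration.integrable_diff Suc.IH)
qed

lemma FI_Psi:
  assumes s: "s > 0" and hw: "h \<bullet> w = pi"
  shows "FI (Psi s h m) w = (-2)^m * FI (Fs s) w"
proof (induction m)
  case 0 then show ?case by (simp add: Psi.simps(1)[abs_def])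
next
  case (Suc m)
  have i1: "integrable lborel (\<lambda>x. Psi s h m (x + h))"
    using integrable_scale_eu[OF Psi_integrable[OF s, of h m], of 1 h] by (simp add: add.commute)
  have "FI (Psi s h (Suc m)) w = (\<integral>\<xi>. complex_of_real (Psi s h m (\<xi> + h)) * cis (\<xi> \<bullet> w) - complex_of_real (Psi s h m \<xi>) * cis (\<xi> \<bullet> w) \<partial>lborel)"
    unfolding FI_def by (simp add: algebra_simps)
  also have "\<dots> = FI (\<lambda>\<xi>. Psi s h m (\<xi> + h)) w - FI (Psi s h m) w"
    unfolding FI_def by (intro Bochner_Integration.integral_diff FI_integrable i1 Psi_integrable[OF s])
  also have "\<dots> = - 2 * FI (Psi s h m) w" using FI_translate[OF hw, of "Psi s h m"] by simp
  also have "\<dots> = (-2)^Suc m * FI (Fs s) w" using Suc.IH by simp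
  finally show ?case .
qed

lemma Psi_fd: "Psi s (\<delta> *\<^sub>R e) m \<xi> = fd \<delta> m (\<lambda>t. Fs s (\<xi> + t *\<^sub>R e)) 0"
proof (induction m arbitrary: \<xi>)
  case 0 then show ?case by simp
next
  case (Suc m)
  have "Psi s (\<delta> *\<^sub>R e) (Suc m) \<xi> = fd \<delta> m (\<lambda>t. Fs s (\<xi> + \<delta> *\<^sub>R e + t *\<^sub>R e)) 0 - fd \<delta> m (\<lambda>t. Fs s (\<xi> + t *\<^sub>R e)) 0"
    using Suc.IH[of "\<xi> + \<delta> *\<^sub>R e"] Suc.IH[of \<xi>] by simp
  also have "\<dots> = fd \<delta> m (\<lambda>t. Fs s (\<xi> + (t + \<delta>) *\<^sub>R e) - Fs s (\<xi> + t *\<^sub>R e)) 0"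
    by (simp add: fd_diff algebra_simps scaleR_add_left)
  finally show ?case by simp
qed


lemma Psi_near:
  fixes e \<xi> :: "'a::euclidean_space"
  assumes s: "s > 0" and e: "norm e = 1" and d: "\<delta> > 0" and m: "m \<ge> 1"
    and x: "norm \<xi> < 2 * m * \<delta>"
  shows "\<bar>Psi s (\<delta> *\<^sub>R e) m \<xi>\<bar> \<le> 2^m * (3 * m * \<delta>) powr s"
proof -
  obtain m' where m': "m = Suc m'" using m by (cases m) auto
  have z: "fd \<delta> m (\<lambda>t. 1) 0 = 0" unfolding m' by (rule fd_const)
  have "Psi s (\<delta> *\<^sub>R e) m \<xi> = fd \<delta> m (\<lambda>t. Fs s (\<xi> + t *\<^sub>R e)) 0 - fd \<delta> m (\<lambda>t. 1) 0"
    unfolding z by (simp only: Psi_fd diff_zero)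
  also have "\<dots> = fd \<delta> m (\<lambda>t. Fs s (\<xi> + t *\<^sub>R e) - 1) 0" by (rule fd_diff[symmetric])
  finally have eq: "Psi s (\<delta> *\<^sub>R e) m \<xi> = fd \<delta> m (\<lambda>t. Fs s (\<xi> + t *\<^sub>R e) - 1) 0" .
  have "\<bar>fd \<delta> m (\<lambda>t. Fs s (\<xi> + t *\<^sub>R e) - 1) 0\<bar> \<le> 2^m * (3 * m * \<delta>) powr s"
  proof (rule fd_bound_sup)
    fix t assume t: "0 \<le> t" "t \<le> 0 + real m * \<delta>"
    have "norm (\<xi> + t *\<^sub>R e) \<le> norm \<xi> + norm (t *\<^sub>R e)" by (rule norm_triangle_ineq)
    also have "\<dots> = norm \<xi> + t" using t e by simp
    also have "\<dots> \<le> 3 * m * \<delta>" using x t by simp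
    finally have n: "norm (\<xi> + t *\<^sub>R e) \<le> 3 * m * \<delta>" .
    have "1 - norm (\<xi> + t *\<^sub>R e) powr s \<le> exp (-(norm (\<xi> + t *\<^sub>R e) powr s))"
      using exp_ge_add_one_self[of "-(norm (\<xi> + t *\<^sub>R e) powr s)"] by simp
    moreover have "exp (-(norm (\<xi> + t *\<^sub>R e) powr s)) \<le> 1" by simp
    moreover have "norm (\<xi> + t *\<^sub>R e) powr s \<le> (3 * m * \<delta>) powr s"
      using n s by (intro powr_mono2) auto
    ultimately show "\<bar>Fs s (\<xi> + t *\<^sub>R e) - 1\<bar> \<le> (3 * m * \<delta>) powr s"
      unfolding Fs_def by linarith
  qed (use d in simp)
  then show ?thesis using eq by simp
qed

definition Wf :: "real \<Rightarrow> nat \<Rightarrow> real \<Rightarrow> 'a::euclidean_space \<Rightarrow> real" where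
  "Wf s m p \<xi> = CG s m * (2 powr (m - s) * norm \<xi> powr (s - p) + (3/2) powr (m * s) * norm \<xi> powr (m * s))
     * exp (-((norm \<xi> / 2) powr s))"

lemma CG_nonneg: "CG s m \<ge> 0"
  unfolding CG_def by (induction "(dl s ^^ m) [(1,0,0)]") (auto intro!: sum_list_nonneg split: prod.splits)

lemma Psi_far:
  fixes e \<xi> :: "'a::euclidean_space"
  assumes s: "s > 0" and e: "norm e = 1" and d: "\<delta> > 0" "\<delta> \<le> 1" and m: "m \<ge> 1"
    and p: "s \<le> real m" "p \<le> real m"
    and x: "2 * m * \<delta> \<le> norm \<xi>"
  shows "\<bar>Psi s (\<delta> *\<^sub>R e) m \<xi>\<bar> \<le> \<delta> powr p * Wf s m p \<xi>"
proof -
  define a where "a = \<xi> \<bullet> e"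
  define b where "b = \<xi> \<bullet> \<xi>"
  define n where "n = norm \<xi>"
  have ee: "e \<bullet> e = 1" using e by (simp add: norm_eq_1)
  have "0 < 2 * real m * \<delta>" using d m by simp
  then have n0: "n > 0" using x unfolding n_def by linarith
  have ab: "a^2 \<le> b"
  proof -
    have "\<bar>a\<bar> \<le> norm \<xi> * norm e" unfolding a_def by (rule Cauchy_Schwarz_ineq2)
    then have "\<bar>a\<bar> \<le> n" using e by (simp add: n_def)
    then have "a^2 \<le> n^2" by (metis abs_le_square_iff abs_of_nonneg n_def norm_ge_zero)
    then show ?thesis by (simp add: b_def n_def power2_norm_eq_inner)
  qed
  have rq: "b + 2*a*t + t^2 = norm (\<xi> + t *\<^sub>R e)^2" for t
  proof -
    have "norm (\<xi> + t *\<^sub>R e)^2 = (\<xi> + t *\<^sub>R e) \<bullet> (\<xi> + t *\<^sub>R e)" by (rule power2_norm_eq_inner)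
    also have "\<dots> = \<xi> \<bullet> \<xi> + 2*t*(\<xi> \<bullet> e) + t^2 * (e \<bullet> e)"
      by (simp add: inner_add_left inner_add_right inner_commute power2_eq_square algebra_simps)
    finally show ?thesis by (simp add: ee a_def b_def)
  qed
  have rhoeq: "rho a b t = norm (\<xi> + t *\<^sub>R e)" for t
    unfolding rho_def rq by simp
  have lower: "n / 2 \<le> norm (\<xi> + t *\<^sub>R e)" and upper: "norm (\<xi> + t *\<^sub>R e) \<le> 3 * n / 2"
    if t: "0 \<le> t" "t \<le> 0 + real m * \<delta>" for t
  proof -
    have "norm \<xi> - norm (t *\<^sub>R e) \<le> norm (\<xi> + t *\<^sub>R e)" by (rule norm_diff_ineq)
    moreover have "norm (t *\<^sub>R e) = t" using t e by simp
    moreover have "t \<le> n / 2" using t x by (simp add: n_def)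
    ultimately show "n / 2 \<le> norm (\<xi> + t *\<^sub>R e)" by (simp add: n_def)
    have "norm (\<xi> + t *\<^sub>R e) \<le> norm \<xi> + norm (t *\<^sub>R e)" by (rule norm_triangle_ineq)
    then show "norm (\<xi> + t *\<^sub>R e) \<le> 3 * n / 2" using \<open>norm (t *\<^sub>R e) = t\<close> \<open>t \<le> n / 2\<close> by (simp add: n_def)
  qed
  have pos: "b + 2*a*t + t^2 > 0" if "0 \<le> t" "t \<le> 0 + real m * \<delta>" for t
  proof -
    have "norm (\<xi> + t *\<^sub>R e) > 0" using lower[OF that] n0 by linarith
    then show ?thesis unfolding rq by simp
  qed
  define M where "M = CG s m * (((n/2) powr (s - m) + (3*n/2) powr (m * s)) * exp (-((n/2) powr s)))"
  have "Psi s (\<delta> *\<^sub>R e) m \<xi> = fd \<delta> m (Gm s a b 0) 0"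
    unfolding Psi_fd
  proof (rule fd_cong)
    fix t assume t: "0 \<le> t" "t \<le> 0 + real m * \<delta>"
    have "norm (\<xi> + t *\<^sub>R e) > 0" using lower[OF t] n0 by linarith
    then show "Fs s (\<xi> + t *\<^sub>R e) = Gm s a b 0 t"
      by (simp add: Gm_def trm_def rhoeq Fs_def)
  qed (use d in simp)
  also have "\<bar>fd \<delta> m (Gm s a b 0) 0\<bar> \<le> \<delta>^m * M"
  proof (rule fd_bound_deriv)
    fix k t assume "k < m" "0 \<le> t" "t \<le> 0 + real m * \<delta>"
    then show "(Gm s a b k has_real_derivative Gm s a b (Suc k) t) (at t)"
      by (intro Gm_deriv pos)
  next
    fix t assume t: "0 \<le> t" "t \<le> 0 + real m * \<delta>"
    have ms: "s \<le> real m" using p by simp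
    have "\<bar>Gm s a b m t\<bar> \<le> CG s m * ((rho a b t powr (s - m) + rho a b t powr (m * s)) * exp (-(rho a b t powr s)))"
      by (rule Gm_bound[OF s ms ab pos[OF t]])
    also have "\<dots> \<le> M" unfolding M_def rhoeq
    proof (intro mult_left_mono mult_mono add_mono CG_nonneg)
      show "norm (\<xi> + t *\<^sub>R e) powr (s - m) \<le> (n/2) powr (s - m)"
        using lower[OF t] n0 ms by (intro powr_mono2') auto
      show "norm (\<xi> + t *\<^sub>R e) powr (m * s) \<le> (3*n/2) powr (m * s)"
        using upper[OF t] s by (intro powr_mono2) auto
      show "exp (-(norm (\<xi> + t *\<^sub>R e) powr s)) \<le> exp (-((n/2) powr s))"
        using lower[OF t] n0 s by (simp add: powr_mono2)
    qed auto
    finally show "\<bar>Gm s a b m t\<bar> \<le> M" .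
  qed (use d in simp)
  also have "\<delta>^m * M \<le> \<delta> powr p * Wf s m p \<xi>"
  proof -
    have dm: "\<delta>^m = \<delta> powr m" using d by (simp add: powr_realpow)
    have r1: "\<delta> / n \<le> 1" using x d m n0 unfolding n_def[symmetric]
    proof -
      have "\<delta> \<le> 2 * m * \<delta>" using d m by simp
      then have "\<delta> \<le> n" using x by (simp add: n_def)
      then show ?thesis using n0 by simp
    qed
    have T1: "\<delta> powr m * (n/2) powr (s - m) \<le> \<delta> powr p * (2 powr (m - s) * n powr (s - p))"
    proof -
      have "\<delta> powr m * (n/2) powr (s - m) = 2 powr (m - s) * (n powr s * (\<delta> / n) powr m)"
        using d n0 by (simp add: powr_divide powr_diff field_simps)
      also have "\<dots> \<le> 2 powr (m - s) * (n powr s * (\<delta> / n) powr p)"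
        using r1 d n0 p by (intro mult_left_mono powr_mono') auto
      also have "\<dots> = \<delta> powr p * (2 powr (m - s) * n powr (s - p))"
        using d n0 by (simp add: powr_divide powr_diff field_simps)
      finally show ?thesis .
    qed
    have T2: "\<delta> powr m * (3*n/2) powr (m * s) \<le> \<delta> powr p * ((3/2) powr (m * s) * n powr (m * s))"
    proof -
      have "\<delta> powr m \<le> \<delta> powr p" using d p by (intro powr_mono') auto
      moreover have "(3*n/2) powr (m * s) = (3/2) powr (m * s) * n powr (m * s)"
        using n0 by (simp add: powr_mult[symmetric])
      ultimately show ?thesis by (simp add: mult_right_mono)
    qed
    have "\<delta>^m * M = CG s m * ((\<delta> powr m * (n/2) powr (s - m) + \<delta> powr m * (3*n/2) powr (m * s)) * exp (-((n/2) powr s)))"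
      unfolding M_def dm by (simp add: algebra_simps)
    also have "\<dots> \<le> CG s m * ((\<delta> powr p * (2 powr (m - s) * n powr (s - p)) + \<delta> powr p * ((3/2) powr (m * s) * n powr (m * s))) * exp (-((n/2) powr s)))"
      using T1 T2 by (intro mult_left_mono mult_right_mono add_mono CG_nonneg) auto
    also have "\<dots> = \<delta> powr p * Wf s m p \<xi>"
      unfolding Wf_def n_def by (simp add: algebra_simps)
    finally show ?thesis .
  qed
  finally show ?thesis .
qed


lemma decay_helper:
  fixes s q D :: real
  assumes s: "s > 0"
  shows "\<exists>C>0. \<forall>r\<ge>1. r powr q * exp (-((r/2) powr s)) \<le> C * r powr (-D)"
proof -
  have c: "(1/2::real) powr s > 0" by simp
  obtain C where C: "C > 0" "\<And>r. r \<ge> 1 \<Longrightarrow> r powr (q + D) * exp (-((1/2) powr s * r powr s)) \<le> C"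
    using powr_exp_bound[OF s c, of "q + D"] by auto
  have "r powr q * exp (-((r/2) powr s)) \<le> C * r powr (-D)" if r: "r \<ge> 1" for r
  proof -
    have e1: "(r/2) powr s = (1/2) powr s * r powr s" using r by (simp add: powr_divide)
    have r0: "r powr D > 0" using r by simp
    have "r powr q * exp (-((r/2) powr s)) = (r powr (q + D) * exp (-((1/2) powr s * r powr s))) * r powr (-D)"
      using r by (simp add: e1 powr_add powr_minus field_simps)
    also have "\<dots> \<le> C * r powr (-D)" using C(2)[OF r] by (intro mult_right_mono) auto
    finally show ?thesis .
  qed
  then show ?thesis using C(1) by blast
qed

lemma Wf_nonneg: "s > 0 \<Longrightarrow> Wf s m p \<xi> \<ge> 0"
  unfolding Wf_def by (intro mult_nonneg_nonneg add_nonneg_nonneg CG_nonneg) auto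

lemma Wf_integrable:
  fixes p :: real
  assumes s: "s > 0" and p: "p - s < DIM('a::euclidean_space)"
  shows "integrable lborel (Wf s m p :: 'a \<Rightarrow> real)"
proof -
  obtain C1 where C1: "C1 > 0" "\<And>r. r \<ge> 1 \<Longrightarrow> r powr (s - p) * exp (-((r/2) powr s)) \<le> C1 * r powr (-(real DIM('a) + 1))"
    using decay_helper[OF s] by blast
  obtain C2 where C2: "C2 > 0" "\<And>r. r \<ge> 1 \<Longrightarrow> r powr (m * s) * exp (-((r/2) powr s)) \<le> C2 * r powr (-(real DIM('a) + 1))"
    using decay_helper[OF s] by blast
  define k1 where "k1 = CG s m * 2 powr (m - s)"
  define k2 where "k2 = CG s m * (3/2) powr (m * s)"
  have k: "k1 \<ge> 0" "k2 \<ge> 0" using CG_nonneg by (auto simp: k1_def k2_def)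
  have Wexp: "Wf s m p \<xi> = k1 * (norm \<xi> powr (s - p) * exp (-((norm \<xi>/2) powr s))) + k2 * (norm \<xi> powr (m * s) * exp (-((norm \<xi>/2) powr s)))" for \<xi> :: 'a
    unfolding Wf_def k1_def k2_def by (simp add: algebra_simps)
  define B where "B = k1 + k1 * C1 + k2 * C2"
  have B0: "B \<ge> 0" using k C1 C2 by (simp add: B_def)
  have h1: "ennreal (norm (Wf s m p x)) \<le> ennreal (k2 + B * norm x powr (- (p - s)))" if x: "norm x \<le> 1" for x :: 'a
  proof -
    have "norm x powr (m * s) \<le> 1 powr (m * s)" by (rule powr_mono2) (use x s in auto)
    then have "norm x powr (m * s) \<le> 1" by simp
    then have "Wf s m p x \<le> k1 * (norm x powr (s - p)) + k2 * 1"
      unfolding Wexp using k by (intro add_mono mult_left_mono) (auto intro!: mult_le_one mult_left_le)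
    also have "\<dots> \<le> k2 + B * norm x powr (- (p - s))"
      using k C1 C2 unfolding B_def by (simp add: algebra_simps mult_nonneg_nonneg)
    finally show ?thesis
      using Wf_nonneg[OF s, of m p x] by (intro ennreal_leI) simp
  qed
  have h2: "ennreal (norm (Wf s m p x)) \<le> ennreal (B * norm x powr (-(real DIM('a) + 1)))" if x: "1 \<le> norm x" for x :: 'a
  proof -
    have "Wf s m p x \<le> k1 * (C1 * norm x powr (-(real DIM('a) + 1))) + k2 * (C2 * norm x powr (-(real DIM('a) + 1)))"
      unfolding Wexp using k by (intro add_mono mult_left_mono C1(2) C2(2) x) auto
    also have "\<dots> \<le> B * norm x powr (-(real DIM('a) + 1))"
      using k unfolding B_def by (simp add: algebra_simps)
    finally show ?thesis
      using Wf_nonneg[OF s, of m p x] by (intro ennreal_leI) simp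
  qed
  have "(\<integral>\<^sup>+x. ennreal (norm (Wf s m p (x::'a))) \<partial>lborel) < \<infinity>"
    using radial_finite[OF _ _ _ B0 h1 h2] p k by auto
  moreover have "(Wf s m p :: 'a \<Rightarrow> real) \<in> borel_measurable lborel" unfolding Wf_def[abs_def] by measurable
  ultimately show ?thesis by (intro integrableI_bounded) auto
qed


lemma measure_ball_scale:
  assumes r: "r > 0"
  shows "measure lborel (ball (0::'a::euclidean_space) r) = r^DIM('a) * measure lborel (ball (0::'a) 1)"
  using emeasure_ball_scale[OF r, where 'a='a] r
  by (simp add: measure_def enn2real_mult)

lemma FI_decay:
  fixes s :: real
  assumes s: "s > 0"
  shows "\<exists>B\<ge>0. \<forall>w::'a::euclidean_space. pi \<le> norm w \<longrightarrow>
            norm (FI (Fs s) w) \<le> B * norm w powr (-(real DIM('a) + min s 1 / 2))"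
proof -
  define d where "d = real DIM('a)"
  define p where "p = d + min s 1 / 2"
  define m where "m = nat \<lceil>max p s\<rceil>"
  have d1: "d \<ge> 1" by (simp add: d_def DIM_positive Suc_le_eq)
  have pm: "p \<le> real m" "s \<le> real m" unfolding m_def by linarith+
  have sp: "p - s < d" "p \<le> s + d" using s d1 by (auto simp: p_def)
  have m1: "m \<ge> 1" using pm s by linarith
  define V1 where "V1 = measure lborel (ball (0::'a) 1)"
  define IW where "IW = (\<integral>\<xi>. Wf s m p (\<xi>::'a) \<partial>lborel)"
  have V1: "V1 \<ge> 0" by (simp add: V1_def)
  have Wint: "integrable lborel (Wf s m p :: 'a \<Rightarrow> real)" by (rule Wf_integrable[OF s]) (use sp in \<open>simp add: d_def\<close>)
  have IW: "IW \<ge> 0" unfolding IW_def by (intro integral_nonneg_AE) (simp add: Wf_nonneg[OF s])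
  define C3 where "C3 = 2^m * (3 * real m) powr s * (2 * real m)^DIM('a) * V1 + IW"
  define B where "B = C3 * pi powr p / 2^m"
  have C3: "C3 \<ge> 0" unfolding C3_def using V1 IW by simp
  have B: "B \<ge> 0" unfolding B_def using C3 by simp
  have "norm (FI (Fs s) w) \<le> B * norm w powr (-p)" if w: "pi \<le> norm w" for w :: 'a
  proof -
    have nw: "norm w > 0" using w pi_gt_zero by linarith
    define \<delta> where "\<delta> = pi / norm w"
    define e where "e = (1 / norm w) *\<^sub>R w"
    have dp: "\<delta> > 0" "\<delta> \<le> 1" using nw w by (auto simp: \<delta>_def)
    have e1: "norm e = 1" using nw by (simp add: e_def)
    have hw: "(\<delta> *\<^sub>R e) \<bullet> w = pi" using nw
      by (simp add: e_def \<delta>_def inner_commute power2_norm_eq_inner[symmetric] power2_eq_square)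
    define P where "P = Psi s (\<delta> *\<^sub>R e) m"
    have Pint: "integrable lborel P" unfolding P_def by (rule Psi_integrable[OF s])
    have "FI P w = (-2)^m * FI (Fs s) w" unfolding P_def by (rule FI_Psi[OF s hw])
    then have "norm (FI P w) = 2^m * norm (FI (Fs s) w)" by (simp add: norm_mult norm_power)
    then have eqF: "norm (FI (Fs s) w) = norm (FI P w) / 2^m" by simp
    have "norm (FI P w) \<le> (\<integral>\<xi>. norm (complex_of_real (P \<xi>) * cis (\<xi> \<bullet> w)) \<partial>lborel)"
      unfolding FI_def by (rule integral_norm_bound)
    also have "\<dots> = (\<integral>\<xi>. \<bar>P \<xi>\<bar> \<partial>lborel)" by (simp add: norm_mult)
    also have "\<dots> \<le> (\<integral>\<xi>. 2^m * (3 * real m * \<delta>) powr s * indicator (ball 0 (2 * real m * \<delta>)) \<xi> + \<delta> powr p * Wf s m p (\<xi>::'a) \<partial>lborel)"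
    proof (rule Bochner_Integration.integral_mono)
      show "integrable lborel (\<lambda>\<xi>. \<bar>P \<xi>\<bar>)" using Pint by auto
      have "emeasure lborel (ball (0::'a) (2 * real m * \<delta>)) < \<infinity>" by (rule emeasure_lborel_ball_finite)
      then have "integrable lborel (indicator (ball (0::'a) (2 * real m * \<delta>)) :: 'a \<Rightarrow> real)" by auto
      then show "integrable lborel (\<lambda>\<xi>::'a. 2^m * (3 * real m * \<delta>) powr s * indicator (ball 0 (2 * real m * \<delta>)) \<xi> + \<delta> powr p * Wf s m p \<xi>)"
        using Wint by (intro Bochner_Integration.integrable_add integrable_mult_right) auto
    next
      fix \<xi> :: 'a
      show "\<bar>P \<xi>\<bar> \<le> 2^m * (3 * real m * \<delta>) powr s * indicator (ball 0 (2 * real m * \<delta>)) \<xi> + \<delta> powr p * Wf s m p \<xi>"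
      proof (cases "norm \<xi> < 2 * real m * \<delta>")
        case True
        have "\<bar>P \<xi>\<bar> \<le> 2^m * (3 * real m * \<delta>) powr s" unfolding P_def by (rule Psi_near[OF s e1 dp(1) m1 True])
        moreover have "0 \<le> \<delta> powr p * Wf s m p \<xi>" using Wf_nonneg[OF s, of m p \<xi>] by (intro mult_nonneg_nonneg) auto
        ultimately show ?thesis using True by (simp add: indicator_def)
      next
        case False
        have "\<bar>P \<xi>\<bar> \<le> \<delta> powr p * Wf s m p \<xi>" unfolding P_def
          by (rule Psi_far[OF s e1 dp m1 pm(2) pm(1)]) (use False in simp)
        then show ?thesis using False by (simp add: indicator_def)
      qed
    qed
    also have "\<dots> = 2^m * (3 * real m * \<delta>) powr s * measure lborel (ball (0::'a) (2 * real m * \<delta>)) + \<delta> powr p * IW"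
    proof -
      have "emeasure lborel (ball (0::'a) (2 * real m * \<delta>)) < \<infinity>" by (rule emeasure_lborel_ball_finite)
      then have "integrable lborel (indicator (ball (0::'a) (2 * real m * \<delta>)) :: 'a \<Rightarrow> real)" by auto
      then show ?thesis unfolding IW_def using Wint
        by (subst Bochner_Integration.integral_add) auto
    qed
    also have "\<dots> = 2^m * (3 * real m * \<delta>) powr s * ((2 * real m * \<delta>)^DIM('a) * V1) + \<delta> powr p * IW"
      unfolding V1_def using dp m1 by (subst measure_ball_scale) auto
    also have "\<dots> = \<delta> powr (s + d) * (2^m * (3 * real m) powr s * (2 * real m)^DIM('a) * V1) + \<delta> powr p * IW"
    proof -
      have "(3 * real m * \<delta>) powr s = (3 * real m) powr s * \<delta> powr s" using dp m1 by (simp add: powr_mult)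
      moreover have "(2 * real m * \<delta>)^DIM('a) = (2 * real m)^DIM('a) * \<delta> powr d"
        using dp by (simp add: d_def powr_realpow power_mult_distrib)
      moreover have "\<delta> powr (s + d) = \<delta> powr s * \<delta> powr d" by (simp add: powr_add)
      ultimately show ?thesis by (simp add: algebra_simps)
    qed
    also have "\<dots> \<le> \<delta> powr p * (2^m * (3 * real m) powr s * (2 * real m)^DIM('a) * V1) + \<delta> powr p * IW"
      using dp sp V1 IW by (intro add_mono mult_right_mono powr_mono') auto
    also have "\<dots> = \<delta> powr p * C3" unfolding C3_def by (simp add: algebra_simps)
    finally have "norm (FI P w) \<le> \<delta> powr p * C3" .
    then have "norm (FI (Fs s) w) \<le> \<delta> powr p * C3 / 2^m" unfolding eqF by (simp add: divide_right_mono)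
    also have "\<delta> powr p * C3 / 2^m = B * norm w powr (-p)"
      unfolding B_def \<delta>_def using nw by (simp add: powr_divide powr_minus field_simps)
    finally show ?thesis .
  qed
  then show ?thesis using B unfolding p_def d_def by blast
qed


lemma kernel_1: "frac_kernel s 1 w = complex_of_real (1 / (2 * pi) ^ CARD('n)) * FI (Fs s) (w :: real^'n)"
  by (simp add: frac_kernel_def FI_def Fs_def)

lemma cis_measurable [measurable]: "cis \<in> borel_measurable borel"
proof -
  have "(\<lambda>x::real. cis x) \<in> borel_measurable borel"
    by (intro borel_measurable_continuous_onI continuous_intros)
  then show ?thesis by simp
qed

lemma kernel_measurable:
  "(\<lambda>w. frac_kernel s \<tau> w) \<in> borel_measurable (borel :: (real^'n) measure)"
proof -
  have "(\<lambda>(w::real^'n, \<xi>::real^'n). complex_of_real (exp (- \<tau> * (norm \<xi> powr s))) * cis (\<xi> \<bullet> w))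
     \<in> borel_measurable (borel \<Otimes>\<^sub>M lborel)"
    by measurable
  then have "(\<lambda>w. LINT \<xi>|lborel. complex_of_real (exp (- \<tau> * (norm \<xi> powr s))) * cis (\<xi> \<bullet> (w::real^'n))) \<in> borel_measurable borel"
    by (rule lborel.borel_measurable_lebesgue_integral)
  then show ?thesis unfolding frac_kernel_def by measurable
qed


lemma kernel_scale:
  assumes s: "s > 0" and t: "\<tau> > 0"
  shows "frac_kernel s \<tau> (w::real^'n) = complex_of_real (\<tau> powr (- real CARD('n) / s)) * frac_kernel s 1 (\<tau> powr (-1/s) *\<^sub>R w)"
proof -
  define c where "c = \<tau> powr (-1/s)"
  have c0: "c > 0" using t by (simp add: c_def)
  have "c powr s = \<tau> powr ((-1/s) * s)" unfolding c_def by (rule powr_powr)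
  also have "(-1/s) * s = -1" using s by simp
  finally have tc: "\<tau> * c powr s = 1" using t by (simp add: powr_minus)
  have cD: "\<bar>c\<bar> ^ DIM(real^'n) = \<tau> powr (- real CARD('n) / s)"
  proof -
    have "\<bar>c\<bar> ^ DIM(real^'n) = c powr (real CARD('n))" using c0 by (simp add: powr_realpow)
    also have "\<dots> = \<tau> powr (- real CARD('n) / s)" unfolding c_def by (simp add: powr_powr)
    finally show ?thesis .
  qed
  have "(LINT \<xi>|lborel. complex_of_real (exp (- \<tau> * (norm \<xi> powr s))) * cis (\<xi> \<bullet> w))
     = \<bar>c\<bar> ^ DIM(real^'n) *\<^sub>R (LINT \<xi>|lborel. complex_of_real (exp (- \<tau> * (norm (0 + c *\<^sub>R \<xi>) powr s))) * cis ((0 + c *\<^sub>R \<xi>) \<bullet> w))"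
    by (rule integral_scale_eu[OF c0[THEN less_imp_neq, symmetric], of "\<lambda>\<xi>::real^'n. complex_of_real (exp (- \<tau> * (norm \<xi> powr s))) * cis (\<xi> \<bullet> w)" 0])
  also have "(\<lambda>\<xi>::real^'n. complex_of_real (exp (- \<tau> * (norm (0 + c *\<^sub>R \<xi>) powr s))) * cis ((0 + c *\<^sub>R \<xi>) \<bullet> w))
      = (\<lambda>\<xi>. complex_of_real (exp (- 1 * (norm \<xi> powr s))) * cis (\<xi> \<bullet> (c *\<^sub>R w)))"
  proof
    fix \<xi> :: "real^'n"
    have "\<tau> * (norm (c *\<^sub>R \<xi>) powr s) = norm \<xi> powr s"
      using c0 tc by (simp add: powr_mult)
    then show "complex_of_real (exp (- \<tau> * (norm (0 + c *\<^sub>R \<xi>) powr s))) * cis ((0 + c *\<^sub>R \<xi>) \<bullet> w)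
      = complex_of_real (exp (- 1 * (norm \<xi> powr s))) * cis (\<xi> \<bullet> (c *\<^sub>R w))"
      by simp
  qed
  finally show ?thesis unfolding frac_kernel_def cD c_def[symmetric]
    by (simp add: scaleR_conv_of_real)
qed


lemma kernel1_sup:
  assumes s: "s > 0"
  shows "\<exists>A\<ge>0. \<forall>w. norm (frac_kernel s 1 (w::real^'n)) \<le> A"
proof -
  define k where "k = 1 / (2 * pi) ^ CARD('n)"
  define A where "A = k * (LINT \<xi>|lborel. Fs s (\<xi>::real^'n))"
  have k0: "k \<ge> 0" by (simp add: k_def)
  have A0: "A \<ge> 0" unfolding A_def using k0 by (intro mult_nonneg_nonneg integral_nonneg_AE) (auto simp: Fs_def)
  have "norm (frac_kernel s 1 (w::real^'n)) \<le> A" for w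
  proof -
    have "norm (FI (Fs s) w) \<le> (LINT \<xi>|lborel. norm (complex_of_real (Fs s \<xi>) * cis (\<xi> \<bullet> w)))"
      unfolding FI_def by (rule integral_norm_bound)
    also have "\<dots> = (LINT \<xi>|lborel. Fs s (\<xi>::real^'n))" by (simp add: norm_mult Fs_def)
    finally show ?thesis unfolding kernel_1 A_def k_def[symmetric] using k0
      by (simp add: norm_mult mult_left_mono)
  qed
  then show ?thesis using A0 by blast
qed

lemma DIM_vec: "DIM(real^'n) = CARD('n)" by simp

lemma kernel1_L1:
  assumes s: "s > 0"
  shows "(\<integral>\<^sup>+w. ennreal (norm (frac_kernel s 1 (w::real^'n))) \<partial>lborel) < \<infinity>"
proof -
  define k where "k = 1 / (2 * pi) ^ CARD('n)"
  define p where "p = real CARD('n) + min s 1 / 2"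
  have k0: "k \<ge> 0" by (simp add: k_def)
  obtain A where A: "A \<ge> 0" "\<And>w. norm (frac_kernel s 1 (w::real^'n)) \<le> A" using kernel1_sup[OF s] by blast
  obtain B where B: "B \<ge> 0" "\<And>w::real^'n. pi \<le> norm w \<Longrightarrow> norm (FI (Fs s) w) \<le> B * norm w powr (-(real DIM(real^'n) + min s 1 / 2))"
    using FI_decay[OF s, where 'a="real^'n"] by blast
  define B' where "B' = k * B + A * pi powr p"
  have B': "B' \<ge> 0" unfolding B'_def using k0 A B by simp
  have p0: "p > 0" using s by (simp add: p_def)
  show ?thesis
  proof (rule radial_finite[where \<beta>i=0 and \<beta>o=p and A=A and B=B'])
    show "0 < real DIM(real^'n)" by simp
    show "real DIM(real^'n) < p" using s by (simp add: p_def)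
  next
    fix x :: "real^'n" assume "norm x \<le> 1"
    have "norm (frac_kernel s 1 x) \<le> A + B' * norm x powr (-0)" using A(2)[of x] B' by (simp add: add_increasing2)
    then show "ennreal (norm (frac_kernel s 1 x)) \<le> ennreal (A + B' * norm x powr (-0))" by (rule ennreal_leI)
  next
    fix x :: "real^'n" assume x1: "1 \<le> norm x"
    have nx: "norm x > 0" using x1 by linarith
    have "norm (frac_kernel s 1 x) \<le> B' * norm x powr (-p)"
    proof (cases "pi \<le> norm x")
      case True
      have "norm (frac_kernel s 1 x) = k * norm (FI (Fs s) x)" unfolding kernel_1 norm_mult norm_of_real k_def by simp
      also have "\<dots> \<le> k * (B * norm x powr (-p))" using B(2)[OF True] k0 by (simp add: p_def mult_left_mono)
      also have "\<dots> \<le> B' * norm x powr (-p)" unfolding B'_def using A by (simp add: algebra_simps)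
      finally show ?thesis .
    next
      case False
      have "pi powr (-p) \<le> norm x powr (-p)" using False nx p0 by (intro powr_mono2') auto
      then have "1 \<le> pi powr p * norm x powr (-p)"
        using p0 by (simp add: powr_minus field_simps)
      then have "A \<le> A * (pi powr p * norm x powr (-p))" using A(1) by (simp add: mult_le_cancel_left1)
      also have "\<dots> \<le> B' * norm x powr (-p)" unfolding B'_def using k0 B by (simp add: algebra_simps)
      finally show ?thesis using A(2)[of x] by linarith
    qed
    then show "ennreal (norm (frac_kernel s 1 x)) \<le> ennreal (B' * norm x powr (-p))" by (rule ennreal_leI)
  qed (use A B' in auto)
qed


declare kernel_measurable [measurable]

lemma Ktau_sup:
  assumes s: "s > 0" and t: "\<tau> > 0" and A: "\<And>w. norm (frac_kernel s 1 (w::real^'n)) \<le> A"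
  shows "norm (frac_kernel s \<tau> (w::real^'n)) \<le> \<tau> powr (- real CARD('n) / s) * A"
  unfolding kernel_scale[OF s t] norm_mult norm_of_real
  using A by (simp add: mult_left_mono)

lemma Ktau_L1:
  assumes s: "s > 0" and t: "\<tau> > 0"
  shows "(\<integral>\<^sup>+y. ennreal (norm (frac_kernel s \<tau> (x - y :: real^'n))) \<partial>lborel)
       = (\<integral>\<^sup>+w. ennreal (norm (frac_kernel s 1 (w::real^'n))) \<partial>lborel)"
proof -
  define c where "c = \<tau> powr (-1/s)"
  have c0: "c > 0" using t by (simp add: c_def)
  have cD: "\<bar>c\<bar> ^ DIM(real^'n) = \<tau> powr (- real CARD('n) / s)"
  proof -
    have "\<bar>c\<bar> ^ DIM(real^'n) = c powr (real CARD('n))" using c0 by (simp add: powr_realpow)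
    also have "\<dots> = \<tau> powr (- real CARD('n) / s)" unfolding c_def by (simp add: powr_powr)
    finally show ?thesis .
  qed
  have "(\<integral>\<^sup>+y. ennreal (norm (frac_kernel s \<tau> (y :: real^'n))) \<partial>lborel)
      = ennreal (\<bar>-1\<bar> ^ DIM(real^'n)) * (\<integral>\<^sup>+y. ennreal (norm (frac_kernel s \<tau> (x + (-1) *\<^sub>R y :: real^'n))) \<partial>lborel)"
    by (rule nn_integral_scale_eu[of "\<lambda>y. ennreal (norm (frac_kernel s \<tau> (y :: real^'n)))"]) auto
  then have e1: "(\<integral>\<^sup>+y. ennreal (norm (frac_kernel s \<tau> (x - y :: real^'n))) \<partial>lborel)
      = (\<integral>\<^sup>+y. ennreal (norm (frac_kernel s \<tau> (y :: real^'n))) \<partial>lborel)" by simp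
  have e2: "(\<integral>\<^sup>+y. ennreal (norm (frac_kernel s \<tau> (y :: real^'n))) \<partial>lborel)
      = ennreal (\<tau> powr (- real CARD('n) / s)) * (\<integral>\<^sup>+y. ennreal (norm (frac_kernel s 1 (0 + c *\<^sub>R y :: real^'n))) \<partial>lborel)"
    unfolding kernel_scale[OF s t] norm_mult norm_of_real c_def[symmetric]
    by (subst nn_integral_cmult[symmetric]) (auto simp: ennreal_mult)
  have e3: "(\<integral>\<^sup>+w. ennreal (norm (frac_kernel s 1 (w::real^'n))) \<partial>lborel)
      = ennreal (\<bar>c\<bar> ^ DIM(real^'n)) * (\<integral>\<^sup>+y. ennreal (norm (frac_kernel s 1 (0 + c *\<^sub>R y :: real^'n))) \<partial>lborel)"
    by (rule nn_integral_scale_eu[of "\<lambda>y. ennreal (norm (frac_kernel s 1 (y :: real^'n)))"]) (use c0 in auto)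
  show ?thesis unfolding e1 e2 e3 cD ..
qed

lemma JR_finite:
  assumes a: "0 < a" "a < real CARD('n)" and R: "R > 0"
  shows "(\<integral>\<^sup>+y. indicator (cball 0 R) y * ennreal (norm (y::real^'n) powr (-a)) \<partial>lborel) < \<infinity>"
proof -
  have "(\<integral>\<^sup>+y. indicator (cball 0 R) y * ennreal (norm (y::real^'n) powr (-a)) \<partial>lborel)
     \<le> (\<integral>\<^sup>+y. indicator (cball 0 1) y * ennreal (norm (y::real^'n) powr (-a)) + ennreal 1 * indicator (cball (0::real^'n) R) y \<partial>lborel)"
  proof (intro nn_integral_mono)
    fix y :: "real^'n"
    show "indicator (cball 0 R) y * ennreal (norm y powr (-a)) \<le> indicator (cball 0 1) y * ennreal (norm y powr (-a)) + ennreal 1 * indicator (cball (0::real^'n) R) y"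
    proof (cases "norm y \<le> 1")
      case True then show ?thesis by (auto simp: indicator_def)
    next
      case False
      have "norm y powr (-a) \<le> 1 powr (-a)" using False a by (intro powr_mono2') auto
      then show ?thesis using False by (auto simp: indicator_def)
    qed
  qed
  also have "\<dots> = (\<integral>\<^sup>+y. indicator (cball 0 1) y * ennreal (norm (y::real^'n) powr (-a)) \<partial>lborel) + (\<integral>\<^sup>+y. ennreal 1 * indicator (cball (0::real^'n) R) y \<partial>lborel)"
    by (rule nn_integral_add) auto
  also have "\<dots> < \<infinity>"
    using shell_in[where 'a="real^'n", of a] a emeasure_lborel_cball_finite[of "0::real^'n" R]
    by (simp add: nn_integral_cmult_indicator less_top)
  finally show ?thesis .
qed


lemma main_estimate:
  fixes u :: "real \<Rightarrow> real ^ 'n \<Rightarrow> real" and s a C :: real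
  assumes s: "s > 0" and a: "0 < a" "a < real CARD('n)" and C: "C > 0"
    and anc: "ancient_solution s u"
    and bd: "\<And>t x. t \<le> 0 \<Longrightarrow> x \<noteq> 0 \<Longrightarrow> \<bar>u t x\<bar> \<le> C * norm x powr (- a)"
    and t0: "t0 \<le> 0" and t: "\<tau> > 0" and R: "R > 0"
    and A: "A \<ge> 0" "\<And>w. norm (frac_kernel s 1 (w::real^'n)) \<le> A"
  shows "ennreal \<bar>u t0 x\<bar> \<le> ennreal (\<tau> powr (- real CARD('n) / s) * A * C)
            * (\<integral>\<^sup>+y. indicator (cball 0 R) y * ennreal (norm (y::real^'n) powr (-a)) \<partial>lborel)
          + ennreal (C * R powr (-a)) * (\<integral>\<^sup>+w. ennreal (norm (frac_kernel s 1 (w::real^'n))) \<partial>lborel)"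
proof -
  define t where "t = t0 - \<tau>"
  have tt: "t < t0" "t \<le> 0" using t t0 by (auto simp: t_def)
  have meas: "u t \<in> borel_measurable lborel" using anc tt by (auto simp: ancient_solution_def)
  have eq: "complex_of_real (u t0 x) = (LINT y|lborel. frac_kernel s \<tau> (x - y) * complex_of_real (u t y))"
  proof -
    have "complex_of_real (u t0 x) = frac_semigroup s (t0 - t) (u t) x"
      using anc tt t0 unfolding ancient_solution_def by blast
    moreover have "t0 - t = \<tau>" by (simp add: t_def)
    ultimately show ?thesis by (simp add: frac_semigroup_def)
  qed
  define f where "f y = frac_kernel s \<tau> (x - y) * complex_of_real (u t y)" for y
  have "\<bar>u t0 x\<bar> = norm (complex_of_real (u t0 x))" by simp
  also have "\<dots> = norm (integral\<^sup>L lborel f)" unfolding eq f_def ..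
  finally have "ennreal \<bar>u t0 x\<bar> = ennreal (norm (integral\<^sup>L lborel f))" by simp
  also have "\<dots> \<le> (\<integral>\<^sup>+y. ennreal (norm (f y)) \<partial>lborel)"
  proof (cases "integrable lborel f")
    case True then show ?thesis by (rule integral_norm_bound_ennreal)
  next
    case False then show ?thesis by (simp add: not_integrable_integral_eq)
  qed
  also have "\<dots> \<le> (\<integral>\<^sup>+y. ennreal (\<tau> powr (- real CARD('n) / s) * A * C) * (indicator (cball 0 R) y * ennreal (norm (y::real^'n) powr (-a)))
        + ennreal (C * R powr (-a)) * ennreal (norm (frac_kernel s \<tau> (x - y))) \<partial>lborel)"
  proof (rule nn_integral_mono_AE)
    show "AE y in lborel. ennreal (norm (f y)) \<le> ennreal (\<tau> powr (- real CARD('n) / s) * A * C) * (indicator (cball 0 R) y * ennreal (norm (y::real^'n) powr (-a)))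
        + ennreal (C * R powr (-a)) * ennreal (norm (frac_kernel s \<tau> (x - y)))"
      using AE_lborel_singleton[of "0::real^'n"]
    proof eventually_elim
      case (elim y)
      have uy: "\<bar>u t y\<bar> \<le> C * norm y powr (-a)" using bd[OF tt(2) elim] .
      have nf: "norm (f y) = norm (frac_kernel s \<tau> (x - y)) * \<bar>u t y\<bar>" by (simp add: f_def norm_mult)
      have K: "norm (frac_kernel s \<tau> (x - y)) \<le> \<tau> powr (- real CARD('n) / s) * A"
        by (rule Ktau_sup[OF s t A(2)])
      have K0: "0 \<le> \<tau> powr (- real CARD('n) / s) * A" using A by simp
      show ?case
      proof (cases "norm y \<le> R")
        case True
        have "norm (f y) \<le> (\<tau> powr (- real CARD('n) / s) * A) * (C * norm y powr (-a))"
          unfolding nf using K0 by (intro mult_mono K uy) auto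
        then have "ennreal (norm (f y)) \<le> ennreal ((\<tau> powr (- real CARD('n) / s) * A * C) * norm y powr (-a))"
          by (intro ennreal_leI) (simp add: mult.assoc)
        also have "\<dots> = ennreal (\<tau> powr (- real CARD('n) / s) * A * C) * ennreal (norm y powr (-a))"
          using K0 C by (intro ennreal_mult) auto
        finally have "ennreal (norm (f y)) \<le> ennreal (\<tau> powr (- real CARD('n) / s) * A * C) * (indicator (cball 0 R) y * ennreal (norm (y::real^'n) powr (-a)))"
          using True by (simp add: indicator_def)
        then show ?thesis by (rule order_trans) simp
      next
        case False
        have "norm y powr (-a) \<le> R powr (-a)" using False R a by (intro powr_mono2') auto
        then have "\<bar>u t y\<bar> \<le> C * R powr (-a)" using uy C by (smt (verit) mult_left_mono)
        then have "norm (f y) \<le> norm (frac_kernel s \<tau> (x - y)) * (C * R powr (-a))"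
          unfolding nf by (intro mult_left_mono) auto
        then have "ennreal (norm (f y)) \<le> ennreal (C * R powr (-a)) * ennreal (norm (frac_kernel s \<tau> (x - y)))"
          using C by (simp add: ennreal_mult[symmetric] mult.commute)
        then show ?thesis by (rule order_trans) simp
      qed
    qed
  qed
  also have "\<dots> = ennreal (\<tau> powr (- real CARD('n) / s) * A * C) * (\<integral>\<^sup>+y. indicator (cball 0 R) y * ennreal (norm (y::real^'n) powr (-a)) \<partial>lborel)
        + ennreal (C * R powr (-a)) * (\<integral>\<^sup>+y. ennreal (norm (frac_kernel s \<tau> (x - y :: real^'n))) \<partial>lborel)"
    by (subst nn_integral_add) (auto simp: nn_integral_cmult)
  also have "(\<integral>\<^sup>+y. ennreal (norm (frac_kernel s \<tau> (x - y :: real^'n))) \<partial>lborel) = (\<integral>\<^sup>+w. ennreal (norm (frac_kernel s 1 (w::real^'n))) \<partial>lborel)"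
    by (rule Ktau_L1[OF s t])
  finally show ?thesis .
qed


theorem theorem5p1:
  fixes u :: "real \<Rightarrow> real ^ 'n \<Rightarrow> real"
    and s a C :: real
  assumes "s > 0" and "0 < a" and "a < real CARD('n)" and "C > 0"
    and "ancient_solution s u"
    and "\<And>t x. t \<le> 0 \<Longrightarrow> x \<noteq> 0 \<Longrightarrow> \<bar>u t x\<bar> \<le> C * norm x powr (- a)"
  shows "\<forall>t\<le>0. \<forall>x. u t x = 0"
proof (intro allI impI)
  fix t0 :: real and x :: "real^'n"
  assume t0: "t0 \<le> 0"
  note s = assms(1) and a = assms(2,3) and C = assms(4) and anc = assms(5) and bd = assms(6)
  obtain A where A: "A \<ge> 0" "\<And>w. norm (frac_kernel s 1 (w::real^'n)) \<le> A" using kernel1_sup[OF s] by blast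
  define N where "N = (\<integral>\<^sup>+w. ennreal (norm (frac_kernel s 1 (w::real^'n))) \<partial>lborel)"
  have "N < \<infinity>" unfolding N_def by (rule kernel1_L1[OF s])
  then obtain N' where N': "N = ennreal N'" "N' \<ge> 0" using ennreal_cases[of N] by (metis top.extremum_strict)
  show "u t0 x = 0"
  proof (rule ccontr)
    assume ne: "u t0 x \<noteq> 0"
    define \<eta> where "\<eta> = \<bar>u t0 x\<bar>"
    have eta: "\<eta> > 0" using ne by (simp add: \<eta>_def)
    have "((\<lambda>R. R powr (-a)) \<longlongrightarrow> 0) at_top" using a by (intro tendsto_neg_powr filterlim_ident) auto
    then have "((\<lambda>R. (C * N') * R powr (-a)) \<longlongrightarrow> 0) at_top" by (rule tendsto_mult_right_zero)
    then have "eventually (\<lambda>R. (C * N') * R powr (-a) < \<eta> / 2) at_top" using eta by (intro order_tendstoD) auto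
    then obtain R0 where R0: "\<And>R. R \<ge> R0 \<Longrightarrow> (C * N') * R powr (-a) < \<eta> / 2" by (auto simp: eventually_at_top_linorder)
    define R where "R = max R0 1"
    have R: "R > 0" "(C * N') * R powr (-a) < \<eta> / 2" using R0[of R] by (auto simp: R_def)
    define J where "J = (\<integral>\<^sup>+y. indicator (cball 0 R) y * ennreal (norm (y::real^'n) powr (-a)) \<partial>lborel)"
    have "J < \<infinity>" unfolding J_def by (rule JR_finite[OF a R(1)])
    then obtain J' where J': "J = ennreal J'" "J' \<ge> 0" using ennreal_cases[of J] by (metis top.extremum_strict)
    have "((\<lambda>\<tau>. \<tau> powr (- real CARD('n) / s)) \<longlongrightarrow> 0) at_top" using s by (intro tendsto_neg_powr filterlim_ident) auto
    then have "((\<lambda>\<tau>. (A * C * J') * \<tau> powr (- real CARD('n) / s)) \<longlongrightarrow> 0) at_top" by (rule tendsto_mult_right_zero)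
    then have "eventually (\<lambda>\<tau>. (A * C * J') * \<tau> powr (- real CARD('n) / s) < \<eta> / 2) at_top" using eta by (intro order_tendstoD) auto
    then obtain T0 where T0: "\<And>\<tau>. \<tau> \<ge> T0 \<Longrightarrow> (A * C * J') * \<tau> powr (- real CARD('n) / s) < \<eta> / 2" by (auto simp: eventually_at_top_linorder)
    define \<tau> where "\<tau> = max T0 1"
    have tau: "\<tau> > 0" "(A * C * J') * \<tau> powr (- real CARD('n) / s) < \<eta> / 2" using T0[of \<tau>] by (auto simp: \<tau>_def)
    have "ennreal \<eta> \<le> ennreal (\<tau> powr (- real CARD('n) / s) * A * C) * J + ennreal (C * R powr (-a)) * N"
      unfolding \<eta>_def J_def N_def by (rule main_estimate[OF s a C anc bd t0 tau(1) R(1) A])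
    also have "\<dots> = ennreal (\<tau> powr (- real CARD('n) / s) * A * C * J' + C * R powr (-a) * N')"
      using A C J' N' by (simp add: ennreal_mult[symmetric] ennreal_plus[symmetric] del: ennreal_plus)
    finally have "\<eta> \<le> \<tau> powr (- real CARD('n) / s) * A * C * J' + C * R powr (-a) * N'"
      using A C J' N' by (subst (asm) ennreal_le_iff) (auto intro!: add_nonneg_nonneg mult_nonneg_nonneg)
    moreover have "\<tau> powr (- real CARD('n) / s) * A * C * J' + C * R powr (-a) * N' < \<eta>"
      using tau(2) R(2) by (simp add: algebra_simps)
    ultimately show False by simp
  qed
qed


end
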